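(* Let $\Omega\subset\mathbb{R}^n$ ($n=2,3$) be a bounded, simply connected Lipschitz domain, and let $\mathbb{U}\subset H^1_D(\Omega)$ and $\mathbb{Q}_c\subset H^1_P(\Omega)$ be closed subspaces. Let $\mu,\lambda,\kappa,\xi>0$ and define $a^I(\mathbf{u},\boldsymbol{\phi})=(2\mu\epsilon(\mathbf{u}),\epsilon(\boldsymbol{\phi}))+(\lambda\nabla\cdot\mathbf{u},\nabla\cdot\boldsymbol{\phi})$, $b^I(\mathbf{u},p)=(\nabla\cdot\mathbf{u},p)$, $d^I(p,q)=(\kappa^{-1}\nabla p,\nabla q)+(\xi p,q)$. Assume the inf-sup condition: there is a constant $\gamma>0$ independent of $\mu,\lambda,\kappa,\xi$ and of the discretization such that for all $p\in(\mathbb{K}^I)^{\perp}$, $\sup_{\mathbf{u}\in\mathbb{U}}\frac{b^I(\mathbf{u},p)}{\|\mathbf{u}\|_1}\ge\gamma\|p\|_0$, where $\mathbb{K}^I=\{p\in\mathbb{Q}_c: b^I(\boldsymbol{\phi},p)=0\ \forall\boldsymbol{\phi}\in\mathbb{U}\}$. Let $\beta=\max\{\mu,\lambda\}$ and define the norms $\|\mathbf{u}\|_{\mathbb{U}}^2=a^I(\mathbf{u},\mathbf{u})$ and $\|q\|_{\mathbb{Q}_c}^2=\beta^{-1}\|q\|_0^2+d^I(q,q)$. Then the problem: find $(\mathbf{u},p)\in\mathbb{U}\times\mathbb{Q}_c$ with $a^I(\mathbf{u},\boldsymbol{\phi})+b^I(\boldsymbol{\phi},p)=(f,\boldsymbol{\phi})$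 and $b^I(\mathbf{u},q)-d^I(p,q)=(g,q)$ for all $(\boldsymbol{\phi},q)\in\mathbb{U}\times\mathbb{Q}_c$, is uniformly well-posed with respect to the parameters under the norms $\|\cdot\|_{\mathbb{U}}$ and $\|\cdot\|_{\mathbb{Q}_c}$.
   Context: $\partial\Omega=\bar\Gamma_{D,u}\cup\bar\Gamma_{N,u}$ with $\Gamma_{D,u}\cap\Gamma_{N,u}=\emptyset$, and $\partial\Omega=\bar\Gamma_{D,v}\cup\bar\Gamma_{N,v}$ with $\Gamma_{D,v}\cap\Gamma_{N,v}=\emptyset$. $H^1_D(\Omega)=\{\mathbf{u}\in (H^1(\Omega))^n:\mathbf{u}=0 \text{ on }\Gamma_{D,u}\}$, $H^1_P(\Omega)=\{p\in H^1(\Omega): p=0\text{ on }\Gamma_{N,v}\}$. $\epsilon(\mathbf{u})=(\nabla\mathbf{u}+\nabla\mathbf{u}^T)/2$; $(\cdot,\cdot)$ and $\|\cdot\|_0$ are the $L^2(\Omega)$ inner product and norm, $\|\cdot\|_1$ the $H^1$ norm. Standing assumptions of the paper: $|\Gamma_{D,u}|>0$ and $|\Gamma_{N,u}|>0$, and (as the paper asserts follows from $|\Gamma_{N,u}|>0$) the kernel $\mathbb{K}^I$ is $\{0\}$. "Uniformly well-posed with respect to parameters under norms $\|\cdot\|_{\mathbb{M}},\|\cdot\|_{\mathbb{N}}$" means: the bilinear form $L(\mathbf{u},p;\boldsymbol{\phi},q)$ given by the left-hand side of the system is bounded on $(\mathbb{M}\times\mathbb{N})^2$ with respect to the product norm $(\|\cdot\|_{\mathbb{M}}^2+\|\cdot\|_{\mathbb{N}}^2)^{1/2}$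 and satisfies $\inf_{(\mathbf{u},p)}\sup_{(\boldsymbol{\phi},q)}\frac{L(\mathbf{u},p;\boldsymbol{\phi},q)}{\|(\mathbf{u},p)\|\,\|(\boldsymbol{\phi},q)\|}\ge c>0$, with both the boundedness constant and $c$ independent of $\mu,\lambda,\kappa,\xi$ (and of the discretization). *)

theory Defs
  imports "HOL-Analysis.Analysis"
begin

definition pdiff :: "(real^'n \<Rightarrow> real) \<Rightarrow> 'n \<Rightarrow> real^'n \<Rightarrow> real" where
  "pdiff f i x = frechet_derivative f (at x) (axis i 1)"

fun iter_pdiff :: "(real^'n \<Rightarrow> real) \<Rightarrow> 'n list \<Rightarrow> real^'n \<Rightarrow> real" where
  "iter_pdiff f [] = f"
| "iter_pdiff f (i # is) = pdiff (iter_pdiff f is) i"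

text \<open>C^infinity on all of R^n: every iterated partial derivative is Frechet
  differentiable everywhere (hence all derivatives exist and are continuous).\<close>
definition smooth_fun :: "(real^'n \<Rightarrow> real) \<Rightarrow> bool" where
  "smooth_fun f \<longleftrightarrow> (\<forall>is x. iter_pdiff f is differentiable (at x))"

definition tsupport :: "(real^'n \<Rightarrow> real) \<Rightarrow> (real^'n) set" where
  "tsupport f = closure {x. f x \<noteq> 0}"

definition test_fun :: "(real^'n) set \<Rightarrow> (real^'n \<Rightarrow> real) \<Rightarrow> bool" where
  "test_fun \<Omega> \<phi> \<longleftrightarrow> smooth_fun \<phi> \<and> compact (tsupport \<phi>) \<and> tsupport \<phi> \<subseteq> \<Omega>"

definition L2 :: "(real^'n) set \<Rightarrow> (real^'n \<Rightarrow> real) \<Rightarrow> bool" where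
  "L2 \<Omega> f \<longleftrightarrow> set_borel_measurable lebesgue \<Omega> f \<and>
                 set_integrable lebesgue \<Omega> (\<lambda>x. (f x)^2)"

definition L2inner :: "(real^'n) set \<Rightarrow> (real^'n \<Rightarrow> real) \<Rightarrow> (real^'n \<Rightarrow> real) \<Rightarrow> real" where
  "L2inner \<Omega> f g = (LINT x:\<Omega>|lebesgue. f x * g x)"

definition L2norm :: "(real^'n) set \<Rightarrow> (real^'n \<Rightarrow> real) \<Rightarrow> real" where
  "L2norm \<Omega> f = sqrt (L2inner \<Omega> f f)"

definition weak_partial :: "(real^'n) set \<Rightarrow> (real^'n \<Rightarrow> real) \<Rightarrow> 'n \<Rightarrow> (real^'n \<Rightarrow> real) \<Rightarrow> bool" where
  "weak_partial \<Omega> f i g \<longleftrightarrow>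
     (\<forall>\<phi>. test_fun \<Omega> \<phi> \<longrightarrow>
        (LINT x:\<Omega>|lebesgue. f x * pdiff \<phi> i x) = - (LINT x:\<Omega>|lebesgue. g x * \<phi> x))"

definition H1 :: "(real^'n) set \<Rightarrow> (real^'n \<Rightarrow> real) \<Rightarrow> bool" where
  "H1 \<Omega> f \<longleftrightarrow> L2 \<Omega> f \<and> (\<forall>i. \<exists>g. L2 \<Omega> g \<and> weak_partial \<Omega> f i g)"

text \<open>The weak partial derivative (unique up to null sets, so all integrals below are well defined).\<close>
definition wpd :: "(real^'n) set \<Rightarrow> (real^'n \<Rightarrow> real) \<Rightarrow> 'n \<Rightarrow> real^'n \<Rightarrow> real" where
  "wpd \<Omega> f i = (SOME g. L2 \<Omega> g \<and> weak_partial \<Omega> f i g)"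

definition H1norm :: "(real^'n) set \<Rightarrow> (real^'n \<Rightarrow> real) \<Rightarrow> real" where
  "H1norm \<Omega> f = sqrt ((L2norm \<Omega> f)^2 + (\<Sum>i\<in>UNIV. (L2norm \<Omega> (wpd \<Omega> f i))^2))"

definition H1v :: "(real^'n) set \<Rightarrow> (real^'n \<Rightarrow> real^'n) \<Rightarrow> bool" where
  "H1v \<Omega> u \<longleftrightarrow> (\<forall>j. H1 \<Omega> (\<lambda>x. u x $ j))"

definition H1vnorm :: "(real^'n) set \<Rightarrow> (real^'n \<Rightarrow> real^'n) \<Rightarrow> real" where
  "H1vnorm \<Omega> u = sqrt (\<Sum>j\<in>UNIV. (H1norm \<Omega> (\<lambda>x. u x $ j))^2)"

text \<open>Weak gradient entry (grad u)_{j i} = d u_j / d x_i, strain and divergence.\<close>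
definition vgrad :: "(real^'n) set \<Rightarrow> (real^'n \<Rightarrow> real^'n) \<Rightarrow> 'n \<Rightarrow> 'n \<Rightarrow> real^'n \<Rightarrow> real" where
  "vgrad \<Omega> u j i = wpd \<Omega> (\<lambda>x. u x $ j) i"

definition strain :: "(real^'n) set \<Rightarrow> (real^'n \<Rightarrow> real^'n) \<Rightarrow> 'n \<Rightarrow> 'n \<Rightarrow> real^'n \<Rightarrow> real" where
  "strain \<Omega> u j i = (\<lambda>x. (vgrad \<Omega> u j i x + vgrad \<Omega> u i j x) / 2)"

definition wdiv :: "(real^'n) set \<Rightarrow> (real^'n \<Rightarrow> real^'n) \<Rightarrow> real^'n \<Rightarrow> real" where
  "wdiv \<Omega> u = (\<lambda>x. \<Sum>j\<in>UNIV. vgrad \<Omega> u j j x)"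

text \<open>f in H^1(Omega) has zero trace on Gamma: f is the H^1(Omega)-limit of functions
  smooth on R^n that vanish in a neighbourhood of Gamma.\<close>
definition H1_zero_on :: "(real^'n) set \<Rightarrow> (real^'n) set \<Rightarrow> (real^'n \<Rightarrow> real) \<Rightarrow> bool" where
  "H1_zero_on \<Omega> \<Gamma> f \<longleftrightarrow> H1 \<Omega> f \<and>
     (\<exists>\<phi> :: nat \<Rightarrow> real^'n \<Rightarrow> real.
        (\<forall>k. smooth_fun (\<phi> k) \<and> (\<exists>V. open V \<and> \<Gamma> \<subseteq> V \<and> (\<forall>x\<in>V. \<phi> k x = 0))) \<and>
        (\<lambda>k. H1norm \<Omega> (\<lambda>x. \<phi> k x - f x)) \<longlonglongrightarrow> 0)"

definition H1_D :: "(real^'n) set \<Rightarrow> (real^'n) set \<Rightarrow> (real^'n \<Rightarrow> real^'n) set" where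
  "H1_D \<Omega> \<Gamma>Du = {u. \<forall>j. H1_zero_on \<Omega> \<Gamma>Du (\<lambda>x. u x $ j)}"

definition H1_P :: "(real^'n) set \<Rightarrow> (real^'n) set \<Rightarrow> (real^'n \<Rightarrow> real) set" where
  "H1_P \<Omega> \<Gamma>Nv = {p. H1_zero_on \<Omega> \<Gamma>Nv p}"

definition closed_subspace_v :: "(real^'n) set \<Rightarrow> (real^'n \<Rightarrow> real^'n) set \<Rightarrow> (real^'n \<Rightarrow> real^'n) set \<Rightarrow> bool" where
  "closed_subspace_v \<Omega> X U \<longleftrightarrow> U \<subseteq> X \<and> (\<lambda>x. 0) \<in> U \<and>
     (\<forall>u\<in>U. \<forall>v\<in>U. (\<lambda>x. u x + v x) \<in> U) \<and> (\<forall>c. \<forall>u\<in>U. (\<lambda>x. c *\<^sub>R u x) \<in> U) \<and>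
     (\<forall>s u. (\<forall>k. s k \<in> U) \<longrightarrow> u \<in> X \<longrightarrow>
        (\<lambda>k. H1vnorm \<Omega> (\<lambda>x. s k x - u x)) \<longlonglongrightarrow> 0 \<longrightarrow> u \<in> U)"

definition closed_subspace_s :: "(real^'n) set \<Rightarrow> (real^'n \<Rightarrow> real) set \<Rightarrow> (real^'n \<Rightarrow> real) set \<Rightarrow> bool" where
  "closed_subspace_s \<Omega> X Q \<longleftrightarrow> Q \<subseteq> X \<and> (\<lambda>x. 0) \<in> Q \<and>
     (\<forall>p\<in>Q. \<forall>q\<in>Q. (\<lambda>x. p x + q x) \<in> Q) \<and> (\<forall>c. \<forall>p\<in>Q. (\<lambda>x. c * p x) \<in> Q) \<and>
     (\<forall>s p. (\<forall>k. s k \<in> Q) \<longrightarrow> p \<in> X \<longrightarrow>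
        (\<lambda>k. H1norm \<Omega> (\<lambda>x. s k x - p x)) \<longlonglongrightarrow> 0 \<longrightarrow> p \<in> Q)"

text \<open>Bounded open set whose boundary is locally, after an orthogonal change of
  coordinates, the graph of a Lipschitz function of the remaining n-1 coordinates
  (with the domain on one side).\<close>
definition lipschitz_domain :: "(real^'n) set \<Rightarrow> bool" where
  "lipschitz_domain \<Omega> \<longleftrightarrow> open \<Omega> \<and> bounded \<Omega> \<and>
     (\<forall>x\<in>frontier \<Omega>. \<exists>(R::real^'n \<Rightarrow> real^'n) (r::real) (h::real^'n \<Rightarrow> real) (L::real) (k::'n).
        orthogonal_transformation R \<and> 0 < r \<and>
        (\<forall>y z. (\<forall>i. i \<noteq> k \<longrightarrow> y $ i = z $ i) \<longrightarrow> h y = h z) \<and>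
        L-lipschitz_on UNIV h \<and>
        \<Omega> \<inter> ball x r = {y \<in> ball x r. h (R y) < R y $ k})"

definition aI :: "(real^'n) set \<Rightarrow> real \<Rightarrow> real \<Rightarrow> (real^'n \<Rightarrow> real^'n) \<Rightarrow> (real^'n \<Rightarrow> real^'n) \<Rightarrow> real" where
  "aI \<Omega> \<mu> lam u \<phi> =
     (\<Sum>j\<in>UNIV. \<Sum>i\<in>UNIV. L2inner \<Omega> (\<lambda>x. 2 * \<mu> * strain \<Omega> u j i x) (strain \<Omega> \<phi> j i))
     + L2inner \<Omega> (\<lambda>x. lam * wdiv \<Omega> u x) (wdiv \<Omega> \<phi>)"

definition bI :: "(real^'n) set \<Rightarrow> (real^'n \<Rightarrow> real^'n) \<Rightarrow> (real^'n \<Rightarrow> real) \<Rightarrow> real" where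
  "bI \<Omega> u p = L2inner \<Omega> (wdiv \<Omega> u) p"

definition dI :: "(real^'n) set \<Rightarrow> real \<Rightarrow> real \<Rightarrow> (real^'n \<Rightarrow> real) \<Rightarrow> (real^'n \<Rightarrow> real) \<Rightarrow> real" where
  "dI \<Omega> \<kappa> \<xi> p q =
     (\<Sum>i\<in>UNIV. L2inner \<Omega> (\<lambda>x. (1 / \<kappa>) * wpd \<Omega> p i x) (wpd \<Omega> q i))
     + L2inner \<Omega> (\<lambda>x. \<xi> * p x) q"

definition LI :: "(real^'n) set \<Rightarrow> real \<Rightarrow> real \<Rightarrow> real \<Rightarrow> real \<Rightarrow>
     (real^'n \<Rightarrow> real^'n) \<times> (real^'n \<Rightarrow> real) \<Rightarrow> (real^'n \<Rightarrow> real^'n) \<times> (real^'n \<Rightarrow> real) \<Rightarrow> real" where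
  "LI \<Omega> \<mu> lam \<kappa> \<xi> up \<phi>q =
     aI \<Omega> \<mu> lam (fst up) (fst \<phi>q) + bI \<Omega> (fst \<phi>q) (snd up)
     + bI \<Omega> (fst up) (snd \<phi>q) - dI \<Omega> \<kappa> \<xi> (snd up) (snd \<phi>q)"

definition prod_normI :: "(real^'n) set \<Rightarrow> real \<Rightarrow> real \<Rightarrow> real \<Rightarrow> real \<Rightarrow>
     (real^'n \<Rightarrow> real^'n) \<times> (real^'n \<Rightarrow> real) \<Rightarrow> real" where
  "prod_normI \<Omega> \<mu> lam \<kappa> \<xi> up =
     sqrt (aI \<Omega> \<mu> lam (fst up) (fst up)
           + (1 / max \<mu> lam) * (L2norm \<Omega> (snd up))^2 + dI \<Omega> \<kappa> \<xi> (snd up) (snd up))"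

text \<open>Uniform well-posedness with constants C (boundedness) and c (inf-sup).\<close>
definition well_posed_with :: "(real^'n) set \<Rightarrow> (real^'n \<Rightarrow> real^'n) set \<Rightarrow> (real^'n \<Rightarrow> real) set \<Rightarrow>
     real \<Rightarrow> real \<Rightarrow> real \<Rightarrow> real \<Rightarrow> real \<Rightarrow> real \<Rightarrow> bool" where
  "well_posed_with \<Omega> U Q \<mu> lam \<kappa> \<xi> C c \<longleftrightarrow>
     (\<forall>up\<in>U \<times> Q. \<forall>\<phi>q\<in>U \<times> Q.
        \<bar>LI \<Omega> \<mu> lam \<kappa> \<xi> up \<phi>q\<bar> \<le> C * prod_normI \<Omega> \<mu> lam \<kappa> \<xi> up * prod_normI \<Omega> \<mu> lam \<kappa> \<xi> \<phi>q) \<and>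
     (\<forall>up\<in>U \<times> Q. prod_normI \<Omega> \<mu> lam \<kappa> \<xi> up > 0 \<longrightarrow>
        (\<forall>t < c * prod_normI \<Omega> \<mu> lam \<kappa> \<xi> up. \<exists>\<phi>q\<in>U \<times> Q.
           prod_normI \<Omega> \<mu> lam \<kappa> \<xi> \<phi>q > 0 \<and>
           LI \<Omega> \<mu> lam \<kappa> \<xi> up \<phi>q > t * prod_normI \<Omega> \<mu> lam \<kappa> \<xi> \<phi>q))"

definition kerI :: "(real^'n) set \<Rightarrow> (real^'n \<Rightarrow> real^'n) set \<Rightarrow> (real^'n \<Rightarrow> real) set \<Rightarrow> (real^'n \<Rightarrow> real) set" where
  "kerI \<Omega> U Q = {p \<in> Q. \<forall>\<phi>\<in>U. bI \<Omega> \<phi> p = 0}"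

definition kerI_perp :: "(real^'n) set \<Rightarrow> (real^'n \<Rightarrow> real^'n) set \<Rightarrow> (real^'n \<Rightarrow> real) set \<Rightarrow> (real^'n \<Rightarrow> real) set" where
  "kerI_perp \<Omega> U Q = {p \<in> Q. \<forall>k\<in>kerI \<Omega> U Q. L2inner \<Omega> p k = 0}"

end

theory Submission
  imports Defs "HOL-Computational_Algebra.Polynomial" "HOL-Real_Asymp.Real_Asymp"
begin


definition sm1 :: "(real \<Rightarrow> real) \<Rightarrow> bool" where
  "sm1 g \<longleftrightarrow> (\<forall>j t. ((deriv ^^ j) g) field_differentiable (at t))"

lemma sm1_diff: "sm1 g \<Longrightarrow> g field_differentiable (at t)"
  unfolding sm1_def by (metis funpow_0)

lemma sm1_hasd: "sm1 g \<Longrightarrow> (g has_field_derivative deriv g t) (at t)"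
  using sm1_diff DERIV_deriv_iff_field_differentiable by blast

lemma sm1_deriv: "sm1 g \<Longrightarrow> sm1 (deriv g)"
  unfolding sm1_def by (metis comp_apply funpow_Suc_right)

lemma funpow_deriv_add:
  assumes "\<forall>j\<le>m. \<forall>t. ((deriv ^^ j) f) field_differentiable (at t)"
      and "\<forall>j\<le>m. \<forall>t. ((deriv ^^ j) g) field_differentiable (at t)"
  shows "(deriv ^^ m) (\<lambda>t. f t + g t) = (\<lambda>t. (deriv ^^ m) f t + (deriv ^^ m) g t)"
  using assms
proof (induction m arbitrary: f g)
  case 0
  then show ?case by simp
next
  case (Suc m)
  have fd: "\<And>t. f field_differentiable (at t)" "\<And>t. g field_differentiable (at t)"
    using Suc.prems by (metis funpow_0 le0)+
  have e: "deriv (\<lambda>t. f t + g t) = (\<lambda>t. deriv f t + deriv g t)"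
    using fd by (auto intro!: ext)
  have p1: "\<forall>j\<le>m. \<forall>t. ((deriv ^^ j) (deriv f)) field_differentiable (at t)"
    using Suc.prems(1) by (metis Suc_le_mono comp_apply funpow_Suc_right)
  have p2: "\<forall>j\<le>m. \<forall>t. ((deriv ^^ j) (deriv g)) field_differentiable (at t)"
    using Suc.prems(2) by (metis Suc_le_mono comp_apply funpow_Suc_right)
  have "(deriv ^^ Suc m) (\<lambda>t. f t + g t) = (deriv ^^ m) (deriv (\<lambda>t. f t + g t))"
    by (simp add: funpow_Suc_right del: funpow.simps)
  also have "\<dots> = (\<lambda>t. (deriv ^^ m) (deriv f) t + (deriv ^^ m) (deriv g) t)"
    unfolding e using Suc.IH[OF p1 p2] .
  finally show ?case by (simp add: funpow_Suc_right del: funpow.simps)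
qed

lemma sm1_mult_aux:
  "\<forall>f g. sm1 f \<longrightarrow> sm1 g \<longrightarrow> (\<forall>j\<le>m. \<forall>t. ((deriv ^^ j) (\<lambda>t. f t * g t)) field_differentiable (at t))"
proof (induction m)
  case 0
  show ?case
  proof (intro allI impI)
    fix f g j t assume "sm1 f" "sm1 g" "j \<le> (0::nat)"
    then show "((deriv ^^ j) (\<lambda>t. f t * g t)) field_differentiable (at t)"
      using field_differentiable_mult[OF sm1_diff sm1_diff] by simp
  qed
next
  case (Suc m)
  show ?case
  proof (intro allI impI)
    fix f g j t assume f: "sm1 f" and g: "sm1 g" and j: "j \<le> Suc m"
    show "((deriv ^^ j) (\<lambda>t. f t * g t)) field_differentiable (at t)"
    proof (cases j)
      case 0
      then show ?thesis using f g field_differentiable_mult[OF sm1_diff sm1_diff] by simp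
    next
      case (Suc j')
      have e: "deriv (\<lambda>t. f t * g t) = (\<lambda>t. deriv f t * g t + f t * deriv g t)"
        using f g by (auto intro!: ext simp: sm1_diff)
      have A: "\<forall>i\<le>j'. \<forall>t. ((deriv ^^ i) (\<lambda>t. deriv f t * g t)) field_differentiable (at t)"
        using Suc.IH f g j Suc sm1_deriv by auto
      have B: "\<forall>i\<le>j'. \<forall>t. ((deriv ^^ i) (\<lambda>t. f t * deriv g t)) field_differentiable (at t)"
        using Suc.IH f g j Suc sm1_deriv by auto
      have "(deriv ^^ j) (\<lambda>t. f t * g t) = (deriv ^^ j') (deriv (\<lambda>t. f t * g t))"
        using Suc by (simp add: funpow_Suc_right del: funpow.simps)
      also have "\<dots> = (\<lambda>t. (deriv ^^ j') (\<lambda>t. deriv f t * g t) t + (deriv ^^ j') (\<lambda>t. f t * deriv g t) t)"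
        unfolding e by (rule funpow_deriv_add[OF A B])
      finally show ?thesis
        using A B by (auto intro!: field_differentiable_add)
    qed
  qed
qed

lemma sm1_mult: "sm1 f \<Longrightarrow> sm1 g \<Longrightarrow> sm1 (\<lambda>t. f t * g t)"
  unfolding sm1_def[of "\<lambda>t. f t * g t"]
proof (intro allI)
  fix j t assume "sm1 f" "sm1 g"
  then show "((deriv ^^ j) (\<lambda>t. f t * g t)) field_differentiable (at t)"
    using sm1_mult_aux[of j] by blast
qed

lemma DERIV_affine_comp:
  assumes "(f has_field_derivative D) (at (a * t + b))"
  shows "((\<lambda>t. f (a * t + b)) has_field_derivative D * a) (at t)"
proof -
  have "((\<lambda>t. a * t + b) has_field_derivative a) (at t)"
    by (auto intro!: derivative_eq_intros)
  from DERIV_chain2[of f D "\<lambda>t. a * t + b" t a UNIV, OF assms this] show ?thesis by simp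
qed

lemma sm1_affine_aux:
  assumes "sm1 g"
  shows "(deriv ^^ m) (\<lambda>t. g (a * t + b)) = (\<lambda>t. a ^ m * (deriv ^^ m) g (a * t + b))"
proof (induction m)
  case 0
  then show ?case by simp
next
  case (Suc m)
  have d: "((\<lambda>t. a ^ m * (deriv ^^ m) g (a * t + b)) has_field_derivative
            a ^ Suc m * (deriv ^^ Suc m) g (a * t + b)) (at t)" for t
  proof -
    have s: "sm1 ((deriv ^^ m) g)" using assms unfolding sm1_def
      by (metis funpow_add comp_apply)
    have "((deriv ^^ m) g has_field_derivative deriv ((deriv ^^ m) g) (a * t + b)) (at (a * t + b))"
      using sm1_hasd[OF s] .
    from DERIV_affine_comp[OF this]
    have "((\<lambda>t. (deriv ^^ m) g (a * t + b)) has_field_derivative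
           deriv ((deriv ^^ m) g) (a * t + b) * a) (at t)" .
    from DERIV_cmult[OF this, of "a ^ m"] show ?thesis
      by (simp add: algebra_simps)
  qed
  have "(deriv ^^ Suc m) (\<lambda>t. g (a * t + b)) = deriv ((deriv ^^ m) (\<lambda>t. g (a * t + b)))"
    by simp
  also have "\<dots> = (\<lambda>t. a ^ Suc m * (deriv ^^ Suc m) g (a * t + b))"
    unfolding Suc.IH using d by (auto intro!: ext DERIV_imp_deriv)
  finally show ?case .
qed

lemma sm1_affine: "sm1 g \<Longrightarrow> sm1 (\<lambda>t. g (a * t + b))"
proof -
  assume g: "sm1 g"
  show ?thesis unfolding sm1_def
  proof (intro allI)
    fix j t
    have s: "sm1 ((deriv ^^ j) g)" using g unfolding sm1_def
      by (metis funpow_add comp_apply)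
    have "((\<lambda>t. (deriv ^^ j) g (a * t + b)) has_field_derivative
           deriv ((deriv ^^ j) g) (a * t + b) * a) (at t)"
      using DERIV_affine_comp[OF sm1_hasd[OF s]] .
    then have "(\<lambda>t. a ^ j * (deriv ^^ j) g (a * t + b)) field_differentiable (at t)"
      by (intro field_differentiable_mult field_differentiable_const) (auto simp: field_differentiable_def)
    then show "((deriv ^^ j) (\<lambda>t. g (a * t + b))) field_differentiable (at t)"
      unfolding sm1_affine_aux[OF g] .
  qed
qed

definition FP :: "real poly \<Rightarrow> real \<Rightarrow> real" where
  "FP P t = (if t > 0 then poly P (1 / t) * exp (- (1 / t)) else 0)"

definition Pd :: "real poly \<Rightarrow> real poly" where
  "Pd P = [:0, 0, 1:] * (P - pderiv P)"

lemma poly_exp_lim: "((\<lambda>s. poly (R::real poly) s / exp s) \<longlongrightarrow> 0) at_top"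
proof -
  have "((\<lambda>s. \<Sum>i\<le>degree R. coeff R i * (s ^ i / exp s)) \<longlongrightarrow> (\<Sum>i\<le>degree R. coeff R i * 0)) at_top"
    by (intro tendsto_sum tendsto_mult tendsto_const) (simp add: tendsto_power_div_exp_0)
  then show ?thesis
    by (simp add: poly_altdef sum_divide_distrib)
qed

lemma FP_pos_deriv:
  assumes "t > 0"
  shows "((\<lambda>t. poly P (1 / t) * exp (- (1 / t))) has_field_derivative
           poly (Pd P) (1 / t) * exp (- (1 / t))) (at t)"
proof -
  have i: "((\<lambda>t. 1 / t) has_field_derivative - (1 / t\<^sup>2)) (at t)"
    using assms by (auto intro!: derivative_eq_intros simp: power2_eq_square)
  have p: "((\<lambda>t. poly P (1 / t)) has_field_derivative poly (pderiv P) (1 / t) * - (1 / t\<^sup>2)) (at t)"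
    using DERIV_chain2[of "\<lambda>x. poly P x" "poly (pderiv P) (1/t)" "\<lambda>t. 1 / t" t "- (1 / t\<^sup>2)" UNIV, OF poly_DERIV i] by simp
  have e: "((\<lambda>t. exp (- (1 / t))) has_field_derivative exp (- (1 / t)) * (1 / t\<^sup>2)) (at t)"
    using assms by (auto intro!: derivative_eq_intros simp: power2_eq_square field_simps)
  have "((\<lambda>t. poly P (1 / t) * exp (- (1 / t))) has_field_derivative
      poly P (1 / t) * (exp (- (1 / t)) * (1 / t\<^sup>2)) + poly (pderiv P) (1 / t) * - (1 / t\<^sup>2) * exp (- (1 / t))) (at t)"
    using DERIV_mult[OF p e] by (simp add: algebra_simps)
  moreover have "poly P (1 / t) * (exp (- (1 / t)) * (1 / t\<^sup>2)) + poly (pderiv P) (1 / t) * - (1 / t\<^sup>2) * exp (- (1 / t))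
      = poly (Pd P) (1 / t) * exp (- (1 / t))"
    by (simp add: Pd_def algebra_simps power2_eq_square)
  ultimately show ?thesis by simp
qed

lemma FP_deriv: "(FP P has_field_derivative FP (Pd P) t) (at t)"
proof -
  consider "t > 0" | "t < 0" | "t = 0" by linarith
  then show ?thesis
  proof cases
    case 1
    have "FP (Pd P) t = poly (Pd P) (1 / t) * exp (- (1 / t))" using 1 by (simp add: FP_def)
    then show ?thesis
      using has_field_derivative_transform_within_open[OF FP_pos_deriv[OF 1], where S="{0<..}" and g="FP P"]
      using 1 by (auto simp: FP_def)
  next
    case 2
    have "((\<lambda>_. 0) has_field_derivative 0) (at t)" by simp
    moreover have "FP (Pd P) t = 0" using 2 by (simp add: FP_def)
    ultimately show ?thesis
      using has_field_derivative_transform_within_open[where S="{..<0}" and g="FP P" and f="\<lambda>_. 0"]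
      using 2 by (auto simp: FP_def)
  next
    case 3
    have l: "((\<lambda>y. (FP P y - FP P 0) / (y - 0)) \<longlongrightarrow> 0) (at_left 0)"
    proof (rule Lim_transform_eventually[OF tendsto_const])
      show "\<forall>\<^sub>F x in at_left 0. 0 = (FP P x - FP P 0) / (x - 0)"
        by (auto simp: FP_def eventually_at_left_field intro!: exI[of _ "-1"])
    qed
    have r: "((\<lambda>y. (FP P y - FP P 0) / (y - 0)) \<longlongrightarrow> 0) (at_right 0)"
    proof (rule Lim_transform_eventually)
      show "((\<lambda>y. poly (pCons 0 P) (inverse y) / exp (inverse y)) \<longlongrightarrow> 0) (at_right 0)"
        using filterlim_compose[OF poly_exp_lim[of "pCons 0 P"] filterlim_inverse_at_top_right] by simp
      show "\<forall>\<^sub>F x in at_right 0. poly (pCons 0 P) (inverse x) / exp (inverse x) = (FP P x - FP P 0) / (x - 0)"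
        by (auto simp: FP_def eventually_at_right_field exp_minus field_simps intro!: exI[of _ "1"])
    qed
    have "(FP P has_field_derivative 0) (at 0)"
      unfolding has_field_derivative_iff using filterlim_split_at[OF l r] .
    then show ?thesis using 3 by (simp add: FP_def)
  qed
qed

lemma FP_funpow: "(deriv ^^ m) (FP P) = FP ((Pd ^^ m) P)"
proof (induction m arbitrary: P)
  case 0
  then show ?case by simp
next
  case (Suc m)
  have "deriv (FP P) = FP (Pd P)"
    using FP_deriv by (auto intro!: ext DERIV_imp_deriv)
  then show ?case using Suc.IH[of "Pd P"]
    by (simp add: funpow_Suc_right del: funpow.simps)
qed

lemma sm1_FP: "sm1 (FP P)"
  unfolding sm1_def FP_funpow field_differentiable_def using FP_deriv by blast

definition fexp :: "real \<Rightarrow> real" where "fexp = FP 1"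

lemma fexp_eq: "fexp t = (if t > 0 then exp (- (1 / t)) else 0)"
  by (simp add: fexp_def FP_def)

lemma sm1_fexp: "sm1 fexp"
  unfolding fexp_def by (rule sm1_FP)


definition prodf :: "('n::finite \<Rightarrow> real \<Rightarrow> real) \<Rightarrow> real^'n \<Rightarrow> real" where
  "prodf G x = (\<Prod>i\<in>UNIV. G i (x $ i))"

lemma prodf_has_derivative:
  assumes "\<forall>i. sm1 (G i)"
  shows "(prodf G has_derivative
           (\<lambda>v. \<Sum>i\<in>UNIV. (deriv (G i) (x $ i) * (v $ i)) * (\<Prod>j\<in>UNIV - {i}. G j (x $ j)))) (at x)"
proof -
  have "((\<lambda>y. G i (y $ i)) has_derivative (\<lambda>v. deriv (G i) (x $ i) * (v $ i))) (at x)" for i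
  proof -
    have "(G i has_derivative (\<lambda>h. deriv (G i) (x $ i) * h)) (at (x $ i))"
      using sm1_hasd[of "G i" "x $ i"] assms by (simp add: has_field_derivative_def)
    from has_derivative_compose[OF bounded_linear_vec_nth[THEN bounded_linear_imp_has_derivative] this]
    show ?thesis by (simp add: o_def)
  qed
  then show ?thesis unfolding prodf_def
    by (rule has_derivative_prod)
qed

lemma prodf_differentiable:
  assumes "\<forall>i. sm1 (G i)"
  shows "prodf G differentiable (at x)"
  using prodf_has_derivative[OF assms, of x] unfolding differentiable_def by blast

lemma pdiff_prodf:
  assumes "\<forall>i. sm1 (G i)"
  shows "pdiff (prodf G) j = prodf (G(j := deriv (G j)))"
proof (rule ext)
  fix x
  have "pdiff (prodf G) j x =
      (\<Sum>i\<in>UNIV. (deriv (G i) (x $ i) * (axis j 1 $ i)) * (\<Prod>k\<in>UNIV - {i}. G k (x $ k)))"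
  proof -
    have "frechet_derivative (prodf G) (at x) =
      (\<lambda>v. \<Sum>i\<in>UNIV. (deriv (G i) (x $ i) * (v $ i)) * (\<Prod>j\<in>UNIV - {i}. G j (x $ j)))"
      by (rule frechet_derivative_at[OF prodf_has_derivative[OF assms, of x], symmetric])
    then show ?thesis unfolding pdiff_def by simp
  qed
  also have "\<dots> = deriv (G j) (x $ j) * (\<Prod>k\<in>UNIV - {j}. G k (x $ k))"
    by (subst sum.remove[of _ j]) (auto simp: axis_def)
  also have "\<dots> = prodf (G(j := deriv (G j))) x"
    unfolding prodf_def
    by (subst prod.remove[of _ j]) (auto intro!: prod.cong)
  finally show "pdiff (prodf G) j x = prodf (G(j := deriv (G j))) x" .
qed

lemma iter_pdiff_prodf:
  assumes "\<forall>i. sm1 (G i)"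
  shows "\<exists>H. (\<forall>i. sm1 (H i)) \<and> iter_pdiff (prodf G) is = prodf H"
proof (induction "is")
  case Nil
  then show ?case using assms by (intro exI[of _ G]) auto
next
  case (Cons j "is")
  then obtain H where H: "\<forall>i. sm1 (H i)" "iter_pdiff (prodf G) is = prodf H" by blast
  have "iter_pdiff (prodf G) (j # is) = prodf (H(j := deriv (H j)))"
    using H pdiff_prodf[of H j] by simp
  moreover have "\<forall>i. sm1 ((H(j := deriv (H j))) i)"
    using H sm1_deriv by auto
  ultimately show ?case by blast
qed

lemma smooth_prodf:
  assumes "\<forall>i. sm1 (G i)"
  shows "smooth_fun (prodf G)"
  unfolding smooth_fun_def
proof (intro allI)
  fix "is" x
  obtain H where "\<forall>i. sm1 (H i)" "iter_pdiff (prodf G) is = prodf H"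
    using iter_pdiff_prodf[OF assms, of "is"] by blast
  then show "iter_pdiff (prodf G) is differentiable (at x)"
    using prodf_differentiable[of H x] by simp
qed

definition bumpG :: "real \<Rightarrow> real^'n \<Rightarrow> real^'n \<Rightarrow> 'n \<Rightarrow> real \<Rightarrow> real" where
  "bumpG k c d i t = fexp (k * (t - c $ i) - 1) * fexp (k * (d $ i - t) - 1)"

definition bump :: "real \<Rightarrow> real^'n \<Rightarrow> real^'n \<Rightarrow> real^'n \<Rightarrow> real" where
  "bump k c d = prodf (bumpG k c d)"

lemma sm1_bumpG: "sm1 (bumpG k c d i)"
proof -
  have a: "sm1 (\<lambda>t. fexp (k * t + (- k * c $ i - 1)))"
    by (rule sm1_affine[OF sm1_fexp])
  have b: "sm1 (\<lambda>t. fexp ((- k) * t + (k * d $ i - 1)))"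
    by (rule sm1_affine[OF sm1_fexp])
  have "bumpG k c d i = (\<lambda>t. fexp (k * t + (- k * c $ i - 1)) * fexp ((- k) * t + (k * d $ i - 1)))"
    by (auto simp: bumpG_def algebra_simps intro!: ext)
  then show ?thesis using sm1_mult[OF a b] by simp
qed

lemma smooth_bump: "smooth_fun (bump k c d)"
  unfolding bump_def by (rule smooth_prodf) (simp add: sm1_bumpG)

lemma fexp_range: "0 \<le> fexp t" "fexp t \<le> 1"
  by (auto simp: fexp_eq)

lemma bump_range: "0 \<le> bump k c d x" "bump k c d x \<le> 1"
  unfolding bump_def prodf_def bumpG_def
  by (auto intro!: prod_nonneg prod_le_1 mult_nonneg_nonneg mult_le_one fexp_range)

lemma bump_continuous: "continuous_on UNIV (bump k c d)"
  using differentiable_imp_continuous_on smooth_bump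
  by (metis differentiable_on_def iter_pdiff.simps(1) smooth_fun_def)

lemma bump_nonzero:
  assumes "bump k c d x \<noteq> 0" "k > 0"
  shows "x \<in> cbox (c + (1/k) *\<^sub>R 1) (d - (1/k) *\<^sub>R 1)"
proof -
  have nz: "bumpG k c d i (x $ i) \<noteq> 0" for i
    using assms unfolding bump_def prodf_def by auto
  have pp: "k * (x $ i - c $ i) - 1 > 0 \<and> k * (d $ i - x $ i) - 1 > 0" for i
    using nz[of i] unfolding bumpG_def fexp_eq by (auto split: if_splits)
  have "c $ i + 1 / k \<le> x $ i \<and> x $ i \<le> d $ i - 1 / k" for i
  proof -
    have "1 / k < x $ i - c $ i" "1 / k < d $ i - x $ i"
      using pp[of i] assms(2) by (simp_all add: divide_less_eq mult.commute)
    then show ?thesis by simp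
  qed
  then show ?thesis by (auto simp: mem_box_cart)
qed

lemma bump_test_fun:
  assumes "box c d \<subseteq> \<Omega>" "k > 0"
  shows "test_fun \<Omega> (bump k c d)"
proof -
  have sub: "{x. bump k c d x \<noteq> 0} \<subseteq> cbox (c + (1/k) *\<^sub>R 1) (d - (1/k) *\<^sub>R 1)"
    using bump_nonzero assms(2) by blast
  have ts: "tsupport (bump k c d) \<subseteq> cbox (c + (1/k) *\<^sub>R 1) (d - (1/k) *\<^sub>R 1)"
    unfolding tsupport_def using closure_minimal[OF sub closed_cbox] .
  have "cbox (c + (1/k) *\<^sub>R 1) (d - (1/k) *\<^sub>R 1) \<subseteq> box c d"
  proof
    fix x assume "x \<in> cbox (c + (1/k) *\<^sub>R 1) (d - (1/k) *\<^sub>R 1)"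
    then have h: "c $ i + 1/k \<le> x $ i \<and> x $ i \<le> d $ i - 1/k" for i
      by (auto simp: mem_box_cart)
    have k1: "0 < 1/k" using assms(2) by simp
    have "c $ i < x $ i \<and> x $ i < d $ i" for i using h[of i] k1 by linarith
    then show "x \<in> box c d" by (auto simp: mem_box_cart)
  qed
  moreover have "compact (tsupport (bump k c d))"
    unfolding tsupport_def using sub
    by (meson bounded_cbox bounded_subset compact_closure)
  ultimately show ?thesis
    unfolding test_fun_def using ts assms(1) smooth_bump by blast
qed

lemma bump_lim:
  "(\<lambda>m. bump (real (Suc m)) c d x) \<longlonglongrightarrow> indicator (box c d) x"
proof (cases "x \<in> box c d")
  case True
  then have pos: "x $ i - c $ i > 0" "d $ i - x $ i > 0" for i
    by (auto simp: mem_box_cart)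
  have f1: "(\<lambda>m. fexp (real (Suc m) * a - 1)) \<longlonglongrightarrow> 1" if a: "a > 0" for a :: real
  proof -
    have fl: "filterlim (\<lambda>m. real (Suc m) * a - 1) at_top sequentially"
      using a by real_asymp
    then have "(\<lambda>m. exp (- (1 / (real (Suc m) * a - 1)))) \<longlonglongrightarrow> exp (- 0)"
      by (intro tendsto_intros tendsto_divide_0[OF tendsto_const] filterlim_at_top_imp_at_infinity)
    moreover have "eventually (\<lambda>m. real (Suc m) * a - 1 > 0) sequentially"
      using fl[unfolded filterlim_at_top_dense, rule_format, of 0] by simp
    ultimately show ?thesis
      by (simp add: Lim_transform_eventually fexp_eq eventually_mono)
  qed
  have "(\<lambda>m. \<Prod>i\<in>UNIV. bumpG (real (Suc m)) c d i (x $ i)) \<longlonglongrightarrow> (\<Prod>i\<in>(UNIV::'a set). 1 * 1)"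
    unfolding bumpG_def by (intro tendsto_prod tendsto_mult f1 pos)
  then show ?thesis using True by (simp add: bump_def prodf_def)
next
  case False
  then obtain i where "x $ i \<le> c $ i \<or> d $ i \<le> x $ i"
    by (auto simp: mem_box_cart not_less)
  then have "k * (x $ i - c $ i) \<le> 0 \<or> k * (d $ i - x $ i) \<le> 0" if "k > 0" for k :: real
  proof (cases "x $ i \<le> c $ i")
    case True
    then have "x $ i - c $ i \<le> 0" by simp
    then show ?thesis using that mult_nonneg_nonpos[of k "x $ i - c $ i"] by simp
  next
    case False
    then have "d $ i - x $ i \<le> 0" using \<open>x $ i \<le> c $ i \<or> d $ i \<le> x $ i\<close> by simp
    then show ?thesis using that mult_nonneg_nonpos[of k "d $ i - x $ i"] by simp
  qed
  then have z0: "bumpG k c d i (x $ i) = 0" if "k > 0" for k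
    using that unfolding bumpG_def fexp_eq by fastforce
  have "bump (real (Suc m)) c d x = 0" for m
  proof -
    have "bumpG (real (Suc m)) c d i (x $ i) = 0" using z0 by simp
    then show ?thesis unfolding bump_def prodf_def by (intro prod_zero) auto
  qed
  then show ?thesis using False by simp
qed


lemma box_Int_box_cart:
  fixes a b c d :: "real^'n"
  shows "box a b \<inter> box c d = box (\<chi> i. max (a$i) (c$i)) (\<chi> i. min (b$i) (d$i))"
  by (auto simp: mem_box_cart)

definition boxgen :: "(real^'n) set \<Rightarrow> (real^'n) set set" where
  "boxgen \<Omega> = {X. \<exists>c d. X = box c d \<and> box c d \<subseteq> \<Omega>} \<union> {A. A \<in> sets borel \<and> A \<inter> \<Omega> = {}}"

lemma boxgen_Int_stable: "Int_stable (boxgen \<Omega>)"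
  unfolding Int_stable_def boxgen_def
proof (intro ballI)
  fix X Y assume X: "X \<in> {X. \<exists>c d. X = box c d \<and> box c d \<subseteq> \<Omega>} \<union> {A. A \<in> sets borel \<and> A \<inter> \<Omega> = {}}"
    and Y: "Y \<in> {X. \<exists>c d. X = box c d \<and> box c d \<subseteq> \<Omega>} \<union> {A. A \<in> sets borel \<and> A \<inter> \<Omega> = {}}"
  show "X \<inter> Y \<in> {X. \<exists>c d. X = box c d \<and> box c d \<subseteq> \<Omega>} \<union> {A. A \<in> sets borel \<and> A \<inter> \<Omega> = {}}"
  proof (cases "\<exists>c d. X = box c d \<and> box c d \<subseteq> \<Omega>")
    case True
    then obtain c d where Xb: "X = box c d" "box c d \<subseteq> \<Omega>" by blast
    show ?thesis
    proof (cases "\<exists>c d. Y = box c d \<and> box c d \<subseteq> \<Omega>")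
      case True
      then obtain c' d' where Yb: "Y = box c' d'" "box c' d' \<subseteq> \<Omega>" by blast
      have "X \<inter> Y = box (\<chi> i. max (c$i) (c'$i)) (\<chi> i. min (d$i) (d'$i))"
        using Xb Yb box_Int_box_cart by blast
      moreover have "X \<inter> Y \<subseteq> \<Omega>" using Xb Yb by blast
      ultimately show ?thesis by auto
    next
      case False
      then have "Y \<inter> \<Omega> = {}" using Y by blast
      then have "X \<inter> Y = {}" using Xb by blast
      then show ?thesis by auto
    qed
  next
    case False
    then have XA: "X \<in> sets borel" "X \<inter> \<Omega> = {}" using X by blast+
    show ?thesis
    proof (cases "\<exists>c d. Y = box c d \<and> box c d \<subseteq> \<Omega>")
      case True
      then have "X \<inter> Y = {}" using XA by blast
      then show ?thesis by auto
    next
      case False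
      then have "Y \<in> sets borel" "Y \<inter> \<Omega> = {}" using Y by blast+
      then show ?thesis using XA by auto
    qed
  qed
qed

lemma boxgen_borel: "boxgen \<Omega> \<subseteq> sets borel"
  unfolding boxgen_def by auto

lemma sets_borel_boxgen:
  fixes \<Omega> :: "(real^'n) set"
  assumes "open \<Omega>"
  shows "sets borel = sigma_sets UNIV (boxgen \<Omega>)"
proof
  show "sigma_sets UNIV (boxgen \<Omega>) \<subseteq> sets borel"
    using sets.sigma_sets_subset[OF boxgen_borel] by simp
next
  have "S \<in> sigma_sets UNIV (boxgen \<Omega>)" if S: "open S" for S :: "(real^'n) set"
  proof -
    have "S - \<Omega> \<in> boxgen \<Omega>"
      unfolding boxgen_def using S assms by auto
    then have 1: "S - \<Omega> \<in> sigma_sets UNIV (boxgen \<Omega>)" by auto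
    obtain D where D: "countable D" "D \<subseteq> Pow (S \<inter> \<Omega>)" "\<And>X. X \<in> D \<Longrightarrow> \<exists>a b. X = box a b" "\<Union>D = S \<inter> \<Omega>"
      using open_countable_Union_open_box[of "S \<inter> \<Omega>"] S assms by blast
    have "X \<in> sigma_sets UNIV (boxgen \<Omega>)" if XD: "X \<in> D" for X
    proof -
      obtain a b where "X = box a b" using D(3) XD by blast
      moreover have "X \<subseteq> \<Omega>" using D(2) XD by blast
      ultimately have "X \<in> boxgen \<Omega>" unfolding boxgen_def by blast
      then show ?thesis by auto
    qed
    then have 2: "S \<inter> \<Omega> \<in> sigma_sets UNIV (boxgen \<Omega>)"
      using sigma_sets_UNION[OF D(1)] D(4) by metis
    have "S = (S - \<Omega>) \<union> (S \<inter> \<Omega>)" by blast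
    then show ?thesis using sigma_sets_Un[OF 1 2] by simp
  qed
  then have "{S. open S} \<subseteq> sigma_sets UNIV (boxgen \<Omega>)" by blast
  then show "sets borel \<subseteq> sigma_sets UNIV (boxgen \<Omega>)"
    unfolding sets_borel by (rule sigma_sets_mono)
qed

lemma ae_zero_from_boxes:
  fixes k :: "real^'n \<Rightarrow> real" and \<Omega> :: "(real^'n) set"
  assumes \<Omega>: "open \<Omega>"
    and int: "integrable lebesgue k"
    and out: "\<And>x. x \<notin> \<Omega> \<Longrightarrow> k x = 0"
    and box0: "\<And>c d. box c d \<subseteq> \<Omega> \<Longrightarrow> integral\<^sup>L lebesgue (\<lambda>x. k x * indicator (box c d) x) = 0"
  shows "AE x in lebesgue. k x = 0"
proof -
  have km: "k \<in> borel_measurable lebesgue" using int by auto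
  obtain k' where k'm: "k' \<in> borel_measurable lborel" and ae: "AE x in lborel. k x = k' x"
    using completion_ex_borel_measurable_real[OF km] by blast
  have aeL: "AE x in lebesgue. k x = k' x" using AE_completion[OF ae] .
  have k'mL: "k' \<in> borel_measurable lebesgue" using k'm by (rule measurable_completion)
  have "integrable lebesgue k'"
    using integrable_cong_AE[OF km k'mL aeL] int by simp
  then have int': "integrable lborel k'"
    using integrable_completion[OF k'm] by simp
  have boxes: "integral\<^sup>L lborel (\<lambda>x. k' x * indicator X x) = 0" if X: "box c d \<subseteq> \<Omega>" "X = box c d" for X c d
  proof -
    have m: "(\<lambda>x. k' x * indicator X x) \<in> borel_measurable lborel"
    proof -
      have "X \<in> sets borel" using X(2) by simp
      then show ?thesis using k'm by (intro borel_measurable_times borel_measurable_indicator) auto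
    qed
    have "integral\<^sup>L lebesgue (\<lambda>x. k x * indicator X x) = integral\<^sup>L lebesgue (\<lambda>x. k' x * indicator X x)"
    proof (rule integral_cong_AE)
      have XL: "X \<in> sets lebesgue" using X(2) by simp
      show "(\<lambda>x. k x * indicator X x) \<in> borel_measurable lebesgue"
        using km XL by (intro borel_measurable_times borel_measurable_indicator) auto
      show "(\<lambda>x. k' x * indicator X x) \<in> borel_measurable lebesgue"
        using k'mL XL by (intro borel_measurable_times borel_measurable_indicator) auto
      show "AE x in lebesgue. k x * indicator X x = k' x * indicator X x"
        using aeL by auto
    qed
    also have "\<dots> = integral\<^sup>L lborel (\<lambda>x. k' x * indicator X x)"
      using integral_completion[OF m] .
    finally show ?thesis using box0[OF X(1)] X(2) by simp
  qed
  have aeout: "AE x in lborel. x \<notin> \<Omega> \<longrightarrow> k' x = 0"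
    using ae out by auto
  define f where "f x = ennreal (k' x)" for x
  define g where "g x = ennreal (- k' x)" for x
  have fm: "f \<in> borel_measurable lborel" and gm: "g \<in> borel_measurable lborel"
    unfolding f_def g_def using k'm by auto
  have fin: "integral\<^sup>N lborel f \<noteq> \<infinity>"
    using integrableD(2)[OF int'] unfolding f_def by simp
  have fin2: "integral\<^sup>N lborel g \<noteq> \<infinity>"
    using integrableD(3)[OF int'] unfolding g_def by simp
  obtain D where D: "countable D" "D \<subseteq> Pow \<Omega>" "\<And>X. X \<in> D \<Longrightarrow> \<exists>a b. X = box a b" "\<Union>D = \<Omega>"
    using open_countable_Union_open_box[OF \<Omega>] by blast
  define D' where "D' = insert (- \<Omega>) D"
  have D'c: "countable D'" "D' \<noteq> {}" using D(1) by (auto simp: D'_def)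
  have D'E: "D' \<subseteq> boxgen \<Omega>"
  proof
    fix X assume "X \<in> D'"
    then consider "X = - \<Omega>" | "X \<in> D" unfolding D'_def by blast
    then show "X \<in> boxgen \<Omega>"
    proof cases
      case 1
      then show ?thesis unfolding boxgen_def using \<Omega> by auto
    next
      case 2
      then obtain a b where "X = box a b" using D(3) by blast
      moreover have "X \<subseteq> \<Omega>" using D(2) 2 by blast
      ultimately show ?thesis unfolding boxgen_def by blast
    qed
  qed
  have D'U: "\<Union>D' = UNIV" using D(4) unfolding D'_def by blast
  have eqE: "emeasure (density lborel f) X = emeasure (density lborel g) X" if X: "X \<in> boxgen \<Omega>" for X
  proof -
    have Xb: "X \<in> sets borel" using X boxgen_borel by blast
    have ef: "emeasure (density lborel f) X = (\<integral>\<^sup>+ x. f x * indicator X x \<partial>lborel)"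
      using emeasure_density[OF fm] Xb by simp
    have eg: "emeasure (density lborel g) X = (\<integral>\<^sup>+ x. g x * indicator X x \<partial>lborel)"
      using emeasure_density[OF gm] Xb by simp
    have fi: "f x * indicator X x = ennreal (k' x * indicator X x)" for x
      unfolding f_def by (auto simp: indicator_def)
    have gi: "g x * indicator X x = ennreal (- (k' x * indicator X x))" for x
      unfolding g_def by (auto simp: indicator_def)
    show ?thesis
    proof (cases "\<exists>c d. X = box c d \<and> box c d \<subseteq> \<Omega>")
      case True
      then obtain c d where cd: "X = box c d" "box c d \<subseteq> \<Omega>" by blast
      have ii: "integrable lborel (\<lambda>x. k' x * indicator X x)"
      proof -
        have "X \<in> sets lborel" using Xb by simp
        from integrable_mult_indicator[OF this int'] show ?thesis by (simp add: mult.commute)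
      qed
      obtain r q where rq0: "0 \<le> r" "0 \<le> q"
        "(\<integral>\<^sup>+ x. ennreal (k' x * indicator X x) \<partial>lborel) = ennreal r"
        "(\<integral>\<^sup>+ x. ennreal (- (k' x * indicator X x)) \<partial>lborel) = ennreal q"
        "(\<lambda>x. k' x * indicator X x) \<in> borel_measurable lborel"
        "integral\<^sup>L lborel (\<lambda>x. k' x * indicator X x) = r - q"
        by (rule integrableE[OF ii])
      note rq = rq0(3) rq0(4) rq0(6)
      have "r = q" using rq(3) boxes[OF cd(2) cd(1)] by simp
      then show ?thesis unfolding ef eg fi gi rq(1,2) by simp
    next
      case False
      then have XO: "X \<inter> \<Omega> = {}" using X unfolding boxgen_def by blast
      have af: "AE x in lborel. f x * indicator X x = 0"
        using aeout XO unfolding f_def by (auto simp: indicator_def)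
      have 1: "(\<integral>\<^sup>+ x. f x * indicator X x \<partial>lborel) = 0"
        using nn_integral_cong_AE[OF af] by simp
      have ag: "AE x in lborel. g x * indicator X x = 0"
        using aeout XO unfolding g_def by (auto simp: indicator_def)
      have 2: "(\<integral>\<^sup>+ x. g x * indicator X x \<partial>lborel) = 0"
        using nn_integral_cong_AE[OF ag] by simp
      show ?thesis unfolding ef eg 1 2 ..
    qed
  qed
  have "density lborel f = density lborel g"
  proof (rule measure_eqI_generator_eq[where \<Omega>=UNIV and E="boxgen \<Omega>" and A="from_nat_into D'"])
    show "Int_stable (boxgen \<Omega>)" by (rule boxgen_Int_stable)
    show "boxgen \<Omega> \<subseteq> Pow UNIV" by simp
    show "\<And>X. X \<in> boxgen \<Omega> \<Longrightarrow> emeasure (density lborel f) X = emeasure (density lborel g) X"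
      by (rule eqE)
    show "sets (density lborel f) = sigma_sets UNIV (boxgen \<Omega>)"
      using sets_borel_boxgen[OF \<Omega>] by simp
    show "sets (density lborel g) = sigma_sets UNIV (boxgen \<Omega>)"
      using sets_borel_boxgen[OF \<Omega>] by simp
    show "range (from_nat_into D') \<subseteq> boxgen \<Omega>"
      using range_from_nat_into[OF D'c(2) D'c(1)] D'E by simp
    show "(\<Union>i. from_nat_into D' i) = UNIV"
      using range_from_nat_into[OF D'c(2) D'c(1)] D'U by simp
    show "emeasure (density lborel f) (from_nat_into D' i) \<noteq> \<infinity>" for i
    proof -
      have Xb: "from_nat_into D' i \<in> sets borel"
        using range_from_nat_into[OF D'c(2) D'c(1)] D'E boxgen_borel by blast
      have "emeasure (density lborel f) (from_nat_into D' i) = (\<integral>\<^sup>+ x. f x * indicator (from_nat_into D' i) x \<partial>lborel)"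
        using emeasure_density[OF fm] Xb by simp
      also have "\<dots> \<le> integral\<^sup>N lborel f"
        by (intro nn_integral_mono) (auto simp: indicator_def)
      finally show ?thesis using fin by (auto simp: top_unique)
    qed
  qed
  then have "AE x in lborel. f x = g x"
    using finite_density_unique[OF fm gm _ _ fin] by simp
  then have "AE x in lborel. k' x = 0"
  proof (rule AE_mp, intro AE_I2 impI)
    fix x assume "f x = g x"
    then have "ennreal (k' x) = ennreal (- k' x)" unfolding f_def g_def .
    show "k' x = 0"
    proof (rule ccontr)
      assume "k' x \<noteq> 0"
      then consider "k' x > 0" | "k' x < 0" by linarith
      then show False
      proof cases
        case 1
        then have "ennreal (- k' x) = 0" by (intro ennreal_neg) simp
        then show False using \<open>ennreal (k' x) = ennreal (- k' x)\<close> 1 by simp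
      next
        case 2
        then have "ennreal (k' x) = 0" by (intro ennreal_neg) simp
        then show False using \<open>ennreal (k' x) = ennreal (- k' x)\<close> 2 by simp
      qed
    qed
  qed
  then have "AE x in lebesgue. k' x = 0" by (rule AE_completion)
  with aeL show ?thesis by auto
qed


lemma open_lebesgue: "open (\<Omega> :: (real^'n) set) \<Longrightarrow> \<Omega> \<in> sets lebesgue"
  by simp

lemma const_set_integrable:
  fixes \<Omega> :: "(real^'n) set"
  assumes "open \<Omega>" "bounded \<Omega>"
  shows "set_integrable lebesgue \<Omega> (\<lambda>x. c::real)"
proof -
  have "\<Omega> \<in> lmeasurable" using bounded_set_imp_lmeasurable[OF assms(2) open_lebesgue[OF assms(1)]] .
  then have "integrable lebesgue (indicat_real \<Omega>)"
    by (intro integrable_real_indicator) (auto simp: fmeasurable_def)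
  then have "integrable lebesgue (\<lambda>x. c * indicat_real \<Omega> x)" by simp
  then show ?thesis unfolding set_integrable_def by (simp add: mult.commute)
qed

lemma L2_meas: "L2 \<Omega> f \<Longrightarrow> set_borel_measurable lebesgue \<Omega> f"
  unfolding L2_def by simp

lemma L2_sq: "L2 \<Omega> f \<Longrightarrow> set_integrable lebesgue \<Omega> (\<lambda>x. (f x)^2)"
  unfolding L2_def by simp

lemma L2_L1:
  fixes \<Omega> :: "(real^'n) set"
  assumes "open \<Omega>" "bounded \<Omega>" "L2 \<Omega> f"
  shows "set_integrable lebesgue \<Omega> f"
proof (rule set_integrable_bound)
  show "set_integrable lebesgue \<Omega> (\<lambda>x. 1 + (f x)^2)"
    using const_set_integrable[OF assms(1,2)] L2_sq[OF assms(3)] by (rule set_integral_add)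
  show "set_borel_measurable lebesgue \<Omega> f" using L2_meas[OF assms(3)] .
  have "\<bar>a\<bar> \<le> 1 + a^2" for a :: real
  proof (cases "\<bar>a\<bar> \<le> 1")
    case True
    then show ?thesis using zero_le_power2[of a] by linarith
  next
    case False
    have "\<bar>a\<bar> * 1 \<le> \<bar>a\<bar> * \<bar>a\<bar>" using False by (intro mult_left_mono) auto
    then show ?thesis by (simp add: power2_eq_square abs_mult_self_eq)
  qed
  then show "AE x in lebesgue. x \<in> \<Omega> \<longrightarrow> norm (f x) \<le> norm (1 + (f x)^2)"
    by simp
qed

lemma set_borel_measurable_mult:
  fixes f g :: "real^'n \<Rightarrow> real"
  assumes "set_borel_measurable lebesgue \<Omega> f" "set_borel_measurable lebesgue \<Omega> g"
  shows "set_borel_measurable lebesgue \<Omega> (\<lambda>x. f x * g x)"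
proof -
  have "(\<lambda>x. indicator \<Omega> x *\<^sub>R (f x * g x)) = (\<lambda>x. (indicator \<Omega> x *\<^sub>R f x) * (indicator \<Omega> x *\<^sub>R g x))"
    by (auto simp: indicator_def)
  then show ?thesis using assms unfolding set_borel_measurable_def by simp
qed

lemma L2_mult:
  assumes "L2 \<Omega> f" "L2 \<Omega> g"
  shows "set_integrable lebesgue \<Omega> (\<lambda>x. f x * g x)"
proof (rule set_integrable_bound)
  show "set_integrable lebesgue \<Omega> (\<lambda>x. (f x)^2 + (g x)^2)"
    using L2_sq[OF assms(1)] L2_sq[OF assms(2)] by (rule set_integral_add)
  show "set_borel_measurable lebesgue \<Omega> (\<lambda>x. f x * g x)"
    using set_borel_measurable_mult[OF L2_meas[OF assms(1)] L2_meas[OF assms(2)]] .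
  have "\<bar>a * b\<bar> \<le> a^2 + b^2" for a b :: real
  proof -
    have "0 \<le> (\<bar>a\<bar> - \<bar>b\<bar>)^2" by simp
    then have "2 * (\<bar>a\<bar> * \<bar>b\<bar>) \<le> a^2 + b^2"
      by (simp add: power2_eq_square algebra_simps)
    moreover have "0 \<le> \<bar>a\<bar> * \<bar>b\<bar>" by simp
    ultimately have "\<bar>a\<bar> * \<bar>b\<bar> \<le> a^2 + b^2" by linarith
    then show ?thesis by (simp add: abs_mult)
  qed
  then show "AE x in lebesgue. x \<in> \<Omega> \<longrightarrow> norm (f x * g x) \<le> norm ((f x)^2 + (g x)^2)"
    by simp
qed

lemma set_integrable_meas:
  fixes g :: "real^'n \<Rightarrow> real"
  shows "set_integrable lebesgue \<Omega> g \<Longrightarrow> set_borel_measurable lebesgue \<Omega> g"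
  unfolding set_integrable_def set_borel_measurable_def by auto

lemma set_int_bounded_mult:
  fixes g \<phi> :: "real^'n \<Rightarrow> real"
  assumes "set_integrable lebesgue \<Omega> g" "\<phi> \<in> borel_measurable lebesgue" "\<And>x. \<bar>\<phi> x\<bar> \<le> 1"
  shows "set_integrable lebesgue \<Omega> (\<lambda>x. g x * \<phi> x)"
proof (rule set_integrable_bound[OF assms(1)])
  have "(\<lambda>x. indicator \<Omega> x *\<^sub>R (g x * \<phi> x)) = (\<lambda>x. (indicator \<Omega> x *\<^sub>R g x) * \<phi> x)"
    by (auto simp: indicator_def)
  then show "set_borel_measurable lebesgue \<Omega> (\<lambda>x. g x * \<phi> x)"
    using set_integrable_meas[OF assms(1)] assms(2) unfolding set_borel_measurable_def by simp
  show "AE x in lebesgue. x \<in> \<Omega> \<longrightarrow> norm (g x * \<phi> x) \<le> norm (g x)"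
    using assms(3) by (auto simp: abs_mult intro!: mult_left_le)
qed

lemma bump_meas: "bump k c d \<in> borel_measurable lebesgue"
proof -
  have "bump k c d \<in> borel_measurable borel"
    using borel_measurable_continuous_onI[OF bump_continuous] .
  then have "bump k c d \<in> borel_measurable lborel" by simp
  then show ?thesis by (rule measurable_completion)
qed

lemma bump_abs: "\<bar>bump k c d x\<bar> \<le> 1"
  using bump_range[of k c d x] by simp

lemma FL_test:
  fixes h :: "real^'n \<Rightarrow> real" and \<Omega> :: "(real^'n) set"
  assumes \<Omega>: "open \<Omega>" and hi: "set_integrable lebesgue \<Omega> h"
    and T: "\<And>\<phi>. test_fun \<Omega> \<phi> \<Longrightarrow> (\<And>x. \<bar>\<phi> x\<bar> \<le> 1) \<Longrightarrow> \<phi> \<in> borel_measurable lebesgue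
              \<Longrightarrow> (LINT x:\<Omega>|lebesgue. h x * \<phi> x) = 0"
  shows "AE x in lebesgue. x \<in> \<Omega> \<longrightarrow> h x = 0"
proof -
  define k where "k x = indicator \<Omega> x * h x" for x
  have ki: "integrable lebesgue k" using hi unfolding set_integrable_def k_def by simp
  have km: "k \<in> borel_measurable lebesgue" using ki by auto
  have "AE x in lebesgue. k x = 0"
  proof (rule ae_zero_from_boxes[OF \<Omega> ki])
    show "\<And>x. x \<notin> \<Omega> \<Longrightarrow> k x = 0" unfolding k_def by simp
    fix c d :: "real^'n" assume cd: "box c d \<subseteq> \<Omega>"
    have bL: "box c d \<in> sets lebesgue" by simp
    define s where "s m x = k x * bump (real (Suc m)) c d x" for m x
    have s0: "integral\<^sup>L lebesgue (s m) = 0" for m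
    proof -
      have "integral\<^sup>L lebesgue (s m) = (LINT x:\<Omega>|lebesgue. h x * bump (real (Suc m)) c d x)"
        unfolding s_def k_def set_lebesgue_integral_def by (simp add: mult.assoc)
      also have "\<dots> = 0"
        by (rule T) (auto intro: bump_test_fun[OF cd] bump_abs bump_meas)
      finally show ?thesis .
    qed
    have lim: "(\<lambda>m. integral\<^sup>L lebesgue (s m)) \<longlonglongrightarrow> integral\<^sup>L lebesgue (\<lambda>x. k x * indicator (box c d) x)"
    proof (rule integral_dominated_convergence[where w="\<lambda>x. norm (k x)"])
      show "(\<lambda>x. k x * indicator (box c d) x) \<in> borel_measurable lebesgue"
        using km bL by (intro borel_measurable_times borel_measurable_indicator) auto
      show "s m \<in> borel_measurable lebesgue" for m
        unfolding s_def using km bump_meas by (intro borel_measurable_times) auto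
      show "integrable lebesgue (\<lambda>x. norm (k x))" using ki by simp
      show "AE x in lebesgue. (\<lambda>m. s m x) \<longlonglongrightarrow> k x * indicator (box c d) x"
        unfolding s_def by (intro AE_I2 tendsto_mult_left bump_lim)
      show "AE x in lebesgue. norm (s m x) \<le> norm (k x)" for m
      proof (intro AE_I2)
        fix x
        have "\<bar>k x\<bar> * \<bar>bump (real (Suc m)) c d x\<bar> \<le> \<bar>k x\<bar> * 1"
          by (intro mult_left_mono bump_abs) auto
        then show "norm (s m x) \<le> norm (k x)" unfolding s_def by (simp add: abs_mult)
      qed
    qed
    then have "(\<lambda>m. 0::real) \<longlonglongrightarrow> integral\<^sup>L lebesgue (\<lambda>x. k x * indicator (box c d) x)"
      using s0 by simp
    then show "integral\<^sup>L lebesgue (\<lambda>x. k x * indicator (box c d) x) = 0"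
      by (simp add: LIMSEQ_const_iff)
  qed
  then show ?thesis
  proof (rule AE_mp, intro AE_I2 impI)
    fix x assume "k x = 0" "x \<in> \<Omega>" then show "h x = 0" by (simp add: k_def)
  qed
qed

lemma wp_unique:
  fixes \<Omega> :: "(real^'n) set"
  assumes \<Omega>: "open \<Omega>" "bounded \<Omega>"
    and L: "L2 \<Omega> g" "L2 \<Omega> g'"
    and W: "weak_partial \<Omega> f i g" "weak_partial \<Omega> f' i g'"
    and ff: "\<And>x. f' x = c * f x"
  shows "AE x in lebesgue. x \<in> \<Omega> \<longrightarrow> g' x = c * g x"
proof -
  have gi: "set_integrable lebesgue \<Omega> g" and g'i: "set_integrable lebesgue \<Omega> g'"
    using L2_L1[OF \<Omega>] L by auto
  have hi: "set_integrable lebesgue \<Omega> (\<lambda>x. g' x - c * g x)"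
    using g'i gi by (intro set_integral_diff(1)) auto
  have "AE x in lebesgue. x \<in> \<Omega> \<longrightarrow> g' x - c * g x = 0"
  proof (rule FL_test[OF \<Omega>(1) hi])
    fix \<phi> :: "real^'n \<Rightarrow> real"
    assume t: "test_fun \<Omega> \<phi>" and b: "\<And>x. \<bar>\<phi> x\<bar> \<le> 1" and m: "\<phi> \<in> borel_measurable lebesgue"
    have i1: "set_integrable lebesgue \<Omega> (\<lambda>x. g' x * \<phi> x)"
      using set_int_bounded_mult[OF g'i m b] .
    have i2: "set_integrable lebesgue \<Omega> (\<lambda>x. c * (g x * \<phi> x))"
      using set_int_bounded_mult[OF gi m b] by simp
    have w1: "(LINT x:\<Omega>|lebesgue. f x * pdiff \<phi> i x) = - (LINT x:\<Omega>|lebesgue. g x * \<phi> x)"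
      using W(1) t unfolding weak_partial_def by blast
    have w2: "(LINT x:\<Omega>|lebesgue. f' x * pdiff \<phi> i x) = - (LINT x:\<Omega>|lebesgue. g' x * \<phi> x)"
      using W(2) t unfolding weak_partial_def by blast
    have "(LINT x:\<Omega>|lebesgue. f' x * pdiff \<phi> i x) = c * (LINT x:\<Omega>|lebesgue. f x * pdiff \<phi> i x)"
      unfolding ff by (simp add: mult.assoc)
    then have e: "(LINT x:\<Omega>|lebesgue. g' x * \<phi> x) = c * (LINT x:\<Omega>|lebesgue. g x * \<phi> x)"
      using w1 w2 by simp
    have "(LINT x:\<Omega>|lebesgue. (g' x - c * g x) * \<phi> x) =
          (LINT x:\<Omega>|lebesgue. g' x * \<phi> x - c * (g x * \<phi> x))"
      by (simp add: algebra_simps)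
    also have "\<dots> = (LINT x:\<Omega>|lebesgue. g' x * \<phi> x) - (LINT x:\<Omega>|lebesgue. c * (g x * \<phi> x))"
      using set_integral_diff(2)[OF i1 i2] .
    also have "\<dots> = 0" using e by simp
    finally show "(LINT x:\<Omega>|lebesgue. (g' x - c * g x) * \<phi> x) = 0" .
  qed
  then show ?thesis
  proof (rule AE_mp, intro AE_I2 impI)
    fix x assume "x \<in> \<Omega> \<longrightarrow> g' x - c * g x = 0" "x \<in> \<Omega>"
    then show "g' x = c * g x" by simp
  qed
qed


lemma L2_add:
  assumes "L2 \<Omega> f" "L2 \<Omega> g"
  shows "L2 \<Omega> (\<lambda>x. f x + g x)"
proof -
  have m: "set_borel_measurable lebesgue \<Omega> (\<lambda>x. f x + g x)"
    using L2_meas[OF assms(1)] L2_meas[OF assms(2)]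
    unfolding set_borel_measurable_def
  proof -
    assume a1: "(\<lambda>x. indicator \<Omega> x *\<^sub>R f x) \<in> borel_measurable lebesgue"
       and a2: "(\<lambda>x. indicator \<Omega> x *\<^sub>R g x) \<in> borel_measurable lebesgue"
    have "(\<lambda>x. indicator \<Omega> x *\<^sub>R (f x + g x)) = (\<lambda>x. indicator \<Omega> x *\<^sub>R f x + indicator \<Omega> x *\<^sub>R g x)"
      by (simp add: distrib_left)
    then show "(\<lambda>x. indicator \<Omega> x *\<^sub>R (f x + g x)) \<in> borel_measurable lebesgue"
      using borel_measurable_add[OF a1 a2] by simp
  qed
  have i1: "set_integrable lebesgue \<Omega> (\<lambda>x. (f x)^2 + 2 * (f x * g x) + (g x)^2)"
    using L2_sq[OF assms(1)] L2_mult[OF assms] L2_sq[OF assms(2)]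
    by (intro set_integral_add(1)) auto
  have eq: "(\<lambda>x. (f x + g x)^2) = (\<lambda>x. (f x)^2 + 2 * (f x * g x) + (g x)^2)"
    by (rule ext) (simp add: power2_eq_square algebra_simps)
  have "set_integrable lebesgue \<Omega> (\<lambda>x. (f x + g x)^2)"
    using i1 unfolding eq .
  then show ?thesis using m unfolding L2_def by simp
qed

lemma L2_cmult:
  assumes "L2 \<Omega> f"
  shows "L2 \<Omega> (\<lambda>x. c * f x)"
proof -
  have m: "set_borel_measurable lebesgue \<Omega> (\<lambda>x. c * f x)"
    using L2_meas[OF assms]
    unfolding set_borel_measurable_def by (simp add: mult.left_commute)
  have "set_integrable lebesgue \<Omega> (\<lambda>x. c^2 * (f x)^2)"
    using L2_sq[OF assms] by simp
  then have "set_integrable lebesgue \<Omega> (\<lambda>x. (c * f x)^2)"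
    by (simp add: power_mult_distrib)
  then show ?thesis using m unfolding L2_def by simp
qed

lemma L2_zero: "L2 \<Omega> (\<lambda>x. 0)"
  unfolding L2_def set_borel_measurable_def set_integrable_def by simp

lemma L2_sum:
  assumes "finite I" "\<And>i. i \<in> I \<Longrightarrow> L2 \<Omega> (F i)"
  shows "L2 \<Omega> (\<lambda>x. \<Sum>i\<in>I. F i x)"
  using assms
proof (induction I rule: finite_induct)
  case empty
  then show ?case using L2_zero by simp
next
  case (insert a I)
  then show ?case using L2_add[of \<Omega> "F a" "\<lambda>x. \<Sum>i\<in>I. F i x"] by simp
qed

lemma L2inner_sym: "L2inner \<Omega> f g = L2inner \<Omega> g f"
  unfolding L2inner_def by (simp add: mult.commute)

lemma L2inner_cmult_left: "L2inner \<Omega> (\<lambda>x. c * f x) g = c * L2inner \<Omega> f g"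
  unfolding L2inner_def by (simp add: mult.assoc)

lemma L2inner_cmult_right: "L2inner \<Omega> f (\<lambda>x. c * g x) = c * L2inner \<Omega> f g"
  unfolding L2inner_def by (simp add: mult.left_commute)

lemma L2inner_zero_right: "L2inner \<Omega> f (\<lambda>x. 0) = 0"
  unfolding L2inner_def by simp

lemma L2inner_nonneg: "0 \<le> L2inner \<Omega> f f"
  unfolding L2inner_def set_lebesgue_integral_def
  by (intro integral_nonneg_AE AE_I2) (auto simp: indicator_def)

lemma L2norm_sq: "(L2norm \<Omega> f)^2 = L2inner \<Omega> f f"
  unfolding L2norm_def using L2inner_nonneg by simp

lemma L2inner_add_left:
  assumes "L2 \<Omega> f" "L2 \<Omega> g" "L2 \<Omega> h"
  shows "L2inner \<Omega> (\<lambda>x. f x + g x) h = L2inner \<Omega> f h + L2inner \<Omega> g h"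
proof -
  have "L2inner \<Omega> (\<lambda>x. f x + g x) h = (LINT x:\<Omega>|lebesgue. f x * h x + g x * h x)"
    unfolding L2inner_def by (simp add: algebra_simps)
  also have "\<dots> = L2inner \<Omega> f h + L2inner \<Omega> g h"
    unfolding L2inner_def using L2_mult[OF assms(1,3)] L2_mult[OF assms(2,3)]
    by (rule set_integral_add(2))
  finally show ?thesis .
qed

lemma L2inner_sum_left:
  assumes "finite I" "\<And>i. i \<in> I \<Longrightarrow> L2 \<Omega> (F i)" "L2 \<Omega> h"
  shows "L2inner \<Omega> (\<lambda>x. \<Sum>i\<in>I. F i x) h = (\<Sum>i\<in>I. L2inner \<Omega> (F i) h)"
  using assms(1,2)
proof (induction I rule: finite_induct)
  case empty
  then show ?case using L2inner_zero_right[of \<Omega> h] by (simp add: L2inner_sym)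
next
  case (insert a I)
  have "L2inner \<Omega> (\<lambda>x. \<Sum>i\<in>insert a I. F i x) h = L2inner \<Omega> (\<lambda>x. F a x + (\<Sum>i\<in>I. F i x)) h"
    using insert by simp
  also have "\<dots> = L2inner \<Omega> (F a) h + L2inner \<Omega> (\<lambda>x. \<Sum>i\<in>I. F i x) h"
    using insert assms(3) by (intro L2inner_add_left L2_sum) auto
  finally show ?case using insert by simp
qed

lemma L2inner_ae_left:
  assumes "L2 \<Omega> f" "L2 \<Omega> f'" "L2 \<Omega> g" "AE x in lebesgue. x \<in> \<Omega> \<longrightarrow> f x = f' x"
  shows "L2inner \<Omega> f g = L2inner \<Omega> f' g"
proof -
  have "integral\<^sup>L lebesgue (\<lambda>x. indicator \<Omega> x *\<^sub>R (f x * g x)) = integral\<^sup>L lebesgue (\<lambda>x. indicator \<Omega> x *\<^sub>R (f' x * g x))"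
  proof (rule integral_cong_AE)
    show "(\<lambda>x. indicator \<Omega> x *\<^sub>R (f x * g x)) \<in> borel_measurable lebesgue"
      using set_borel_measurable_mult[OF L2_meas[OF assms(1)] L2_meas[OF assms(3)]]
      unfolding set_borel_measurable_def .
    show "(\<lambda>x. indicator \<Omega> x *\<^sub>R (f' x * g x)) \<in> borel_measurable lebesgue"
      using set_borel_measurable_mult[OF L2_meas[OF assms(2)] L2_meas[OF assms(3)]]
      unfolding set_borel_measurable_def .
    show "AE x in lebesgue. indicator \<Omega> x *\<^sub>R (f x * g x) = indicator \<Omega> x *\<^sub>R (f' x * g x)"
      using assms(4) by (auto simp: indicator_def)
  qed
  then show ?thesis unfolding L2inner_def set_lebesgue_integral_def .
qed

lemma L2inner_ae_right:
  assumes "L2 \<Omega> f" "L2 \<Omega> g" "L2 \<Omega> g'" "AE x in lebesgue. x \<in> \<Omega> \<longrightarrow> g x = g' x"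
  shows "L2inner \<Omega> f g = L2inner \<Omega> f g'"
  using L2inner_ae_left[OF assms(2,3,1,4)] by (simp add: L2inner_sym)

lemma L2inner_amgm:
  assumes "L2 \<Omega> f" "L2 \<Omega> g" "t > 0"
  shows "\<bar>L2inner \<Omega> f g\<bar> \<le> (t * L2inner \<Omega> f f + L2inner \<Omega> g g / t) / 2"
proof -
  have pw: "\<bar>a * b\<bar> \<le> (t * (a * a) + (b * b) / t) / 2" for a b :: real
  proof -
    have "0 \<le> (t * \<bar>a\<bar> - \<bar>b\<bar>)^2" by simp
    then have "2 * t * (\<bar>a\<bar> * \<bar>b\<bar>) \<le> t * t * (a * a) + b * b"
      by (simp add: power2_eq_square algebra_simps)
    then have "2 * t * (\<bar>a\<bar> * \<bar>b\<bar>) / t \<le> (t * t * (a * a) + b * b) / t"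
      using assms(3) by (intro divide_right_mono) auto
    then show ?thesis using assms(3) by (simp add: abs_mult field_simps power2_eq_square)
  qed
  have ifg: "set_integrable lebesgue \<Omega> (\<lambda>x. f x * g x)" using L2_mult[OF assms(1,2)] .
  have iff: "set_integrable lebesgue \<Omega> (\<lambda>x. f x * f x)" using L2_mult[OF assms(1,1)] .
  have igg: "set_integrable lebesgue \<Omega> (\<lambda>x. g x * g x)" using L2_mult[OF assms(2,2)] .
  have iR: "set_integrable lebesgue \<Omega> (\<lambda>x. (t * (f x * f x) + (g x * g x) / t) / 2)"
    using iff igg by (intro set_integrable_divide set_integral_add(1) set_integrable_mult_right) auto
  have R: "(LINT x:\<Omega>|lebesgue. (t * (f x * f x) + (g x * g x) / t) / 2) = (t * L2inner \<Omega> f f + L2inner \<Omega> g g / t) / 2"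
  proof -
    have "(LINT x:\<Omega>|lebesgue. (t * (f x * f x) + (g x * g x) / t) / 2) =
          (LINT x:\<Omega>|lebesgue. t * (f x * f x) + (g x * g x) / t) / 2"
      by simp
    also have "(LINT x:\<Omega>|lebesgue. t * (f x * f x) + (g x * g x) / t) =
          (LINT x:\<Omega>|lebesgue. t * (f x * f x)) + (LINT x:\<Omega>|lebesgue. (g x * g x) / t)"
      using iff igg by (intro set_integral_add(2)) auto
    finally show ?thesis unfolding L2inner_def by simp
  qed
  have "(LINT x:\<Omega>|lebesgue. f x * g x) \<le> (LINT x:\<Omega>|lebesgue. (t * (f x * f x) + (g x * g x) / t) / 2)"
  proof (rule set_integral_mono[OF ifg iR])
    fix x show "f x * g x \<le> (t * (f x * f x) + (g x * g x) / t) / 2"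
      using pw[of "f x" "g x"] by linarith
  qed
  then have "L2inner \<Omega> f g \<le> (t * L2inner \<Omega> f f + L2inner \<Omega> g g / t) / 2"
    using R unfolding L2inner_def by linarith
  moreover have "- L2inner \<Omega> f g \<le> (t * L2inner \<Omega> f f + L2inner \<Omega> g g / t) / 2"
  proof -
    have "- L2inner \<Omega> f g = (LINT x:\<Omega>|lebesgue. - (f x * g x))"
      unfolding L2inner_def using set_integral_uminus[OF ifg] by simp
    also have "\<dots> \<le> (LINT x:\<Omega>|lebesgue. (t * (f x * f x) + (g x * g x) / t) / 2)"
    proof (rule set_integral_mono[OF _ iR])
      show "set_integrable lebesgue \<Omega> (\<lambda>x. - (f x * g x))"
        using ifg unfolding set_integrable_def by simp
      fix x show "- (f x * g x) \<le> (t * (f x * f x) + (g x * g x) / t) / 2"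
        using pw[of "f x" "g x"] by linarith
    qed
    finally show ?thesis using R by linarith
  qed
  ultimately show ?thesis by linarith
qed

lemma amgm_opt:
  fixes X a b :: real
  assumes H: "\<And>t. t > 0 \<Longrightarrow> X \<le> (t * a + b / t) / 2" and a: "a \<ge> 0" and b: "b \<ge> 0"
  shows "X \<le> sqrt a * sqrt b"
proof (cases "a > 0 \<and> b > 0")
  case True
  define t where "t = sqrt b / sqrt a"
  have t: "t > 0" using True by (simp add: t_def)
  have "t * a = sqrt a * sqrt b"
    using True unfolding t_def by (simp add: field_simps)
  moreover have "b / t = sqrt a * sqrt b"
    using True unfolding t_def by (simp add: field_simps)
  ultimately show ?thesis using H[OF t] by simp
next
  case False
  then have z: "sqrt a * sqrt b = 0" using a b by auto
  show ?thesis
  proof (rule ccontr)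
    assume "\<not> X \<le> sqrt a * sqrt b"
    then have X: "X > 0" using z by simp
    show False
    proof (cases "a = 0")
      case True
      define t where "t = (b + 1) / X"
      have t: "t > 0" using X b by (simp add: t_def)
      have "b / t = b * X / (b + 1)" using X b by (simp add: t_def field_simps)
      also have "\<dots> < X" using X b by (simp add: field_simps)
      finally have "b / t < X" .
      then have "(t * a + b / t) / 2 < X" using True X by simp
      then show False using H[OF t] by simp
    next
      case False
      then have b0: "b = 0" using \<open>\<not> (a > 0 \<and> b > 0)\<close> a b by auto
      define t where "t = X / (a + 1)"
      have t: "t > 0" using X a by (simp add: t_def)
      have "t * a = X * a / (a + 1)" by (simp add: t_def)
      also have "\<dots> < X" using X a by (simp add: field_simps)
      finally have "t * a < X" .
      then have "(t * a + b / t) / 2 < X" using b0 X by simp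
      then show False using H[OF t] by simp
    qed
  qed
qed

lemma L2inner_cs:
  assumes "L2 \<Omega> f" "L2 \<Omega> g"
  shows "\<bar>L2inner \<Omega> f g\<bar> \<le> sqrt (L2inner \<Omega> f f) * sqrt (L2inner \<Omega> g g)"
  by (rule amgm_opt[OF L2inner_amgm[OF assms]]) (auto intro: L2inner_nonneg)


lemma L2inner_add_right:
  assumes "L2 \<Omega> f" "L2 \<Omega> g" "L2 \<Omega> h"
  shows "L2inner \<Omega> h (\<lambda>x. f x + g x) = L2inner \<Omega> h f + L2inner \<Omega> h g"
  using L2inner_add_left[OF assms] by (simp add: L2inner_sym)

lemma L2inner_sum_right:
  assumes "finite I" "\<And>i. i \<in> I \<Longrightarrow> L2 \<Omega> (F i)" "L2 \<Omega> h"
  shows "L2inner \<Omega> h (\<lambda>x. \<Sum>i\<in>I. F i x) = (\<Sum>i\<in>I. L2inner \<Omega> h (F i))"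
  using L2inner_sum_left[OF assms] by (simp add: L2inner_sym)

lemma L2inner_sum_sq:
  assumes "finite I" "\<And>i. i \<in> I \<Longrightarrow> L2 \<Omega> (F i)"
  shows "L2inner \<Omega> (\<lambda>x. \<Sum>i\<in>I. F i x) (\<lambda>x. \<Sum>i\<in>I. F i x) \<le> real (card I) * (\<Sum>i\<in>I. L2inner \<Omega> (F i) (F i))"
proof -
  have LS: "L2 \<Omega> (\<lambda>x. \<Sum>i\<in>I. F i x)" using L2_sum[OF assms] .
  have "L2inner \<Omega> (\<lambda>x. \<Sum>i\<in>I. F i x) (\<lambda>x. \<Sum>i\<in>I. F i x) = (\<Sum>i\<in>I. L2inner \<Omega> (F i) (\<lambda>x. \<Sum>i\<in>I. F i x))"
    using L2inner_sum_left[OF assms LS] .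
  also have "\<dots> = (\<Sum>i\<in>I. \<Sum>j\<in>I. L2inner \<Omega> (F i) (F j))"
    using L2inner_sum_right[OF assms] assms(2) by (intro sum.cong) auto
  also have "\<dots> \<le> (\<Sum>i\<in>I. \<Sum>j\<in>I. (L2inner \<Omega> (F i) (F i) + L2inner \<Omega> (F j) (F j)) / 2)"
  proof (intro sum_mono)
    fix i j assume "i \<in> I" "j \<in> I"
    then show "L2inner \<Omega> (F i) (F j) \<le> (L2inner \<Omega> (F i) (F i) + L2inner \<Omega> (F j) (F j)) / 2"
      using L2inner_amgm[of \<Omega> "F i" "F j" 1] assms(2) by simp
  qed
  also have "\<dots> = real (card I) * (\<Sum>i\<in>I. L2inner \<Omega> (F i) (F i))"
  proof -
    define A where "A i = L2inner \<Omega> (F i) (F i)" for i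
    have "(\<Sum>i\<in>I. \<Sum>j\<in>I. (A i + A j) / 2) = (\<Sum>i\<in>I. \<Sum>j\<in>I. A i) / 2 + (\<Sum>i\<in>I. \<Sum>j\<in>I. A j) / 2"
      by (simp only: sum.distrib add_divide_distrib sum_divide_distrib)
    also have "(\<Sum>i\<in>I. \<Sum>j\<in>I. A i) = real (card I) * (\<Sum>i\<in>I. A i)"
      by (simp add: sum_distrib_left sum_distrib_right mult.commute)
    also have "(\<Sum>i\<in>I. \<Sum>j\<in>I. A j) = real (card I) * (\<Sum>i\<in>I. A i)"
      by simp
    finally show ?thesis unfolding A_def by simp
  qed
  finally show ?thesis .
qed

lemma sum_amgm:
  fixes X Y Z :: "'i \<Rightarrow> real"
  assumes "\<And>i. i \<in> I \<Longrightarrow> \<bar>X i\<bar> \<le> (t * Y i + Z i / t) / 2"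
  shows "\<bar>\<Sum>i\<in>I. X i\<bar> \<le> (t * (\<Sum>i\<in>I. Y i) + (\<Sum>i\<in>I. Z i) / t) / 2"
proof -
  have "\<bar>\<Sum>i\<in>I. X i\<bar> \<le> (\<Sum>i\<in>I. \<bar>X i\<bar>)" by (rule sum_abs)
  also have "\<dots> \<le> (\<Sum>i\<in>I. (t * Y i + Z i / t) / 2)" using assms by (intro sum_mono) auto
  also have "\<dots> = (t * (\<Sum>i\<in>I. Y i) + (\<Sum>i\<in>I. Z i) / t) / 2"
    by (simp add: sum.distrib sum_divide_distrib[symmetric] sum_distrib_left)
  finally show ?thesis .
qed

lemma H1_wpd:
  assumes "H1 \<Omega> f"
  shows "L2 \<Omega> (wpd \<Omega> f i)" "weak_partial \<Omega> f i (wpd \<Omega> f i)"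
proof -
  have "\<exists>g. L2 \<Omega> g \<and> weak_partial \<Omega> f i g" using assms unfolding H1_def by blast
  then have "L2 \<Omega> (wpd \<Omega> f i) \<and> weak_partial \<Omega> f i (wpd \<Omega> f i)"
    unfolding wpd_def by (rule someI_ex)
  then show "L2 \<Omega> (wpd \<Omega> f i)" "weak_partial \<Omega> f i (wpd \<Omega> f i)" by auto
qed

lemma H1_L2: "H1 \<Omega> f \<Longrightarrow> L2 \<Omega> f"
  unfolding H1_def by simp

lemma vgrad_L2: "H1v \<Omega> u \<Longrightarrow> L2 \<Omega> (vgrad \<Omega> u j i)"
  unfolding H1v_def vgrad_def using H1_wpd by blast

lemma strain_eq: "strain \<Omega> u j i = (\<lambda>x. (1/2) * (vgrad \<Omega> u j i x + vgrad \<Omega> u i j x))"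
  unfolding strain_def by auto

lemma strain_L2: "H1v \<Omega> u \<Longrightarrow> L2 \<Omega> (strain \<Omega> u j i)"
  unfolding strain_eq by (intro L2_cmult L2_add vgrad_L2)

lemma strain_diag: "strain \<Omega> u j j = vgrad \<Omega> u j j"
  unfolding strain_def by auto

lemma wdiv_L2: "H1v \<Omega> u \<Longrightarrow> L2 \<Omega> (wdiv \<Omega> u)"
  unfolding wdiv_def by (intro L2_sum vgrad_L2) auto

definition SS :: "(real^'n) set \<Rightarrow> (real^'n \<Rightarrow> real^'n) \<Rightarrow> (real^'n \<Rightarrow> real^'n) \<Rightarrow> real" where
  "SS \<Omega> u \<phi> = (\<Sum>j\<in>UNIV. \<Sum>i\<in>UNIV. L2inner \<Omega> (strain \<Omega> u j i) (strain \<Omega> \<phi> j i))"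

definition DD :: "(real^'n) set \<Rightarrow> (real^'n \<Rightarrow> real^'n) \<Rightarrow> (real^'n \<Rightarrow> real^'n) \<Rightarrow> real" where
  "DD \<Omega> u \<phi> = L2inner \<Omega> (wdiv \<Omega> u) (wdiv \<Omega> \<phi>)"

definition GG :: "(real^'n) set \<Rightarrow> (real^'n \<Rightarrow> real) \<Rightarrow> (real^'n \<Rightarrow> real) \<Rightarrow> real" where
  "GG \<Omega> p q = (\<Sum>i\<in>UNIV. L2inner \<Omega> (wpd \<Omega> p i) (wpd \<Omega> q i))"

lemma aI_eq: "aI \<Omega> \<mu> lam u \<phi> = 2 * \<mu> * SS \<Omega> u \<phi> + lam * DD \<Omega> u \<phi>"
  unfolding aI_def SS_def DD_def
  by (simp add: L2inner_cmult_left sum_distrib_left)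

lemma dI_eq: "dI \<Omega> \<kappa> \<xi> p q = (1 / \<kappa>) * GG \<Omega> p q + \<xi> * L2inner \<Omega> p q"
  unfolding dI_def GG_def
  by (simp only: L2inner_cmult_left sum_distrib_left)

lemma SS_nonneg: "0 \<le> SS \<Omega> u u"
  unfolding SS_def by (intro sum_nonneg L2inner_nonneg)

lemma DD_nonneg: "0 \<le> DD \<Omega> u u"
  unfolding DD_def by (rule L2inner_nonneg)

lemma GG_nonneg: "0 \<le> GG \<Omega> p p"
  unfolding GG_def by (intro sum_nonneg L2inner_nonneg)

lemma SS_amgm:
  assumes "H1v \<Omega> u" "H1v \<Omega> \<phi>" "t > 0"
  shows "\<bar>SS \<Omega> u \<phi>\<bar> \<le> (t * SS \<Omega> u u + SS \<Omega> \<phi> \<phi> / t) / 2"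
proof -
  have "\<bar>(\<Sum>j\<in>UNIV. \<Sum>i\<in>UNIV. L2inner \<Omega> (strain \<Omega> u j i) (strain \<Omega> \<phi> j i))\<bar> \<le>
        (t * (\<Sum>j\<in>UNIV. \<Sum>i\<in>UNIV. L2inner \<Omega> (strain \<Omega> u j i) (strain \<Omega> u j i)) +
         (\<Sum>j\<in>UNIV. \<Sum>i\<in>UNIV. L2inner \<Omega> (strain \<Omega> \<phi> j i) (strain \<Omega> \<phi> j i)) / t) / 2"
    by (intro sum_amgm L2inner_amgm strain_L2 assms)
  then show ?thesis unfolding SS_def .
qed

lemma DD_amgm:
  assumes "H1v \<Omega> u" "H1v \<Omega> \<phi>" "t > 0"
  shows "\<bar>DD \<Omega> u \<phi>\<bar> \<le> (t * DD \<Omega> u u + DD \<Omega> \<phi> \<phi> / t) / 2"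
  unfolding DD_def by (intro L2inner_amgm wdiv_L2 assms)

lemma GG_amgm:
  assumes "H1 \<Omega> p" "H1 \<Omega> q" "t > 0"
  shows "\<bar>GG \<Omega> p q\<bar> \<le> (t * GG \<Omega> p p + GG \<Omega> q q / t) / 2"
  unfolding GG_def by (intro sum_amgm L2inner_amgm H1_wpd assms)

lemma DD_le_SS:
  assumes "H1v \<Omega> u"
  shows "DD \<Omega> u u \<le> real CARD('n) * SS \<Omega> (u :: real^'n \<Rightarrow> real^'n) u"
proof -
  have "DD \<Omega> u u \<le> real CARD('n) * (\<Sum>j\<in>UNIV. L2inner \<Omega> (vgrad \<Omega> u j j) (vgrad \<Omega> u j j))"
    unfolding DD_def wdiv_def
    by (rule L2inner_sum_sq) (auto intro: vgrad_L2 assms)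
  also have "(\<Sum>j\<in>UNIV. L2inner \<Omega> (vgrad \<Omega> u j j) (vgrad \<Omega> u j j)) \<le> SS \<Omega> u u"
  proof -
    have "(\<Sum>j\<in>UNIV. L2inner \<Omega> (vgrad \<Omega> u j j) (vgrad \<Omega> u j j)) =
          (\<Sum>j\<in>UNIV. L2inner \<Omega> (strain \<Omega> u j j) (strain \<Omega> u j j))"
      by (simp add: strain_diag)
    also have "\<dots> \<le> SS \<Omega> u u"
      unfolding SS_def
    proof (rule sum_mono)
      fix j :: 'n
      show "L2inner \<Omega> (strain \<Omega> u j j) (strain \<Omega> u j j) \<le> (\<Sum>i\<in>UNIV. L2inner \<Omega> (strain \<Omega> u j i) (strain \<Omega> u j i))"
        using member_le_sum[of j UNIV "\<lambda>i. L2inner \<Omega> (strain \<Omega> u j i) (strain \<Omega> u j i)"]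
        by (simp add: L2inner_nonneg)
    qed
    finally show ?thesis .
  qed
  then have "real CARD('n) * (\<Sum>j\<in>UNIV. L2inner \<Omega> (vgrad \<Omega> u j j) (vgrad \<Omega> u j j)) \<le> real CARD('n) * SS \<Omega> u u"
    by (intro mult_left_mono) auto
  finally show ?thesis .
qed

definition GV :: "(real^'n) set \<Rightarrow> (real^'n \<Rightarrow> real^'n) \<Rightarrow> real" where
  "GV \<Omega> u = (\<Sum>j\<in>UNIV. \<Sum>i\<in>UNIV. L2inner \<Omega> (vgrad \<Omega> u j i) (vgrad \<Omega> u j i))"

lemma SS_le_GV:
  assumes "H1v \<Omega> u"
  shows "SS \<Omega> u u \<le> GV \<Omega> u"
proof -
  have e: "L2inner \<Omega> (strain \<Omega> u j i) (strain \<Omega> u j i) \<le>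
      (L2inner \<Omega> (vgrad \<Omega> u j i) (vgrad \<Omega> u j i) + L2inner \<Omega> (vgrad \<Omega> u i j) (vgrad \<Omega> u i j)) / 2" for j i
  proof -
    let ?a = "vgrad \<Omega> u j i" and ?b = "vgrad \<Omega> u i j"
    have La: "L2 \<Omega> ?a" and Lb: "L2 \<Omega> ?b" using vgrad_L2[OF assms] by auto
    have Lab: "L2 \<Omega> (\<lambda>x. ?a x + ?b x)" using L2_add[OF La Lb] .
    have "L2inner \<Omega> (strain \<Omega> u j i) (strain \<Omega> u j i) =
          (1/2) * ((1/2) * L2inner \<Omega> (\<lambda>x. ?a x + ?b x) (\<lambda>x. ?a x + ?b x))"
      unfolding strain_eq L2inner_cmult_left L2inner_cmult_right by simp
    also have "L2inner \<Omega> (\<lambda>x. ?a x + ?b x) (\<lambda>x. ?a x + ?b x) =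
        L2inner \<Omega> ?a ?a + L2inner \<Omega> ?a ?b + (L2inner \<Omega> ?b ?a + L2inner \<Omega> ?b ?b)"
      unfolding L2inner_add_left[OF La Lb Lab] L2inner_add_right[OF La Lb La] L2inner_add_right[OF La Lb Lb] ..
    finally have eq: "L2inner \<Omega> (strain \<Omega> u j i) (strain \<Omega> u j i) =
        (L2inner \<Omega> ?a ?a + 2 * L2inner \<Omega> ?a ?b + L2inner \<Omega> ?b ?b) / 4"
      by (simp add: L2inner_sym[of \<Omega> ?b ?a])
    have "\<bar>L2inner \<Omega> ?a ?b\<bar> \<le> (L2inner \<Omega> ?a ?a + L2inner \<Omega> ?b ?b) / 2"
      using L2inner_amgm[OF La Lb, of 1] by simp
    then have "L2inner \<Omega> ?a ?b \<le> (L2inner \<Omega> ?a ?a + L2inner \<Omega> ?b ?b) / 2"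
      by (rule abs_le_D1)
    then show ?thesis unfolding eq by (simp add: field_simps)
  qed
  have "SS \<Omega> u u \<le> (\<Sum>j\<in>UNIV. \<Sum>i\<in>UNIV.
      (L2inner \<Omega> (vgrad \<Omega> u j i) (vgrad \<Omega> u j i) + L2inner \<Omega> (vgrad \<Omega> u i j) (vgrad \<Omega> u i j)) / 2)"
    unfolding SS_def by (intro sum_mono e)
  also have "\<dots> = (GV \<Omega> u + (\<Sum>j\<in>UNIV. \<Sum>i\<in>UNIV. L2inner \<Omega> (vgrad \<Omega> u i j) (vgrad \<Omega> u i j))) / 2"
    unfolding GV_def by (simp add: sum.distrib sum_divide_distrib[symmetric] add_divide_distrib)
  also have "(\<Sum>j\<in>UNIV. \<Sum>i\<in>UNIV. L2inner \<Omega> (vgrad \<Omega> u i j) (vgrad \<Omega> u i j)) = GV \<Omega> u"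
    unfolding GV_def by (rule sum.swap)
  finally show ?thesis by simp
qed

lemma GV_le_H1vnorm:
  assumes "H1v \<Omega> u"
  shows "GV \<Omega> u \<le> (H1vnorm \<Omega> u)^2"
proof -
  have h: "(H1norm \<Omega> f)^2 = (L2norm \<Omega> f)^2 + (\<Sum>i\<in>UNIV. (L2norm \<Omega> (wpd \<Omega> f i))^2)" for f
    unfolding H1norm_def by (simp add: sum_nonneg)
  have "(H1vnorm \<Omega> u)^2 = (\<Sum>j\<in>UNIV. (H1norm \<Omega> (\<lambda>x. u x $ j))^2)"
    unfolding H1vnorm_def by (simp add: sum_nonneg)
  also have "\<dots> \<ge> GV \<Omega> u"
    unfolding GV_def
  proof (rule sum_mono)
    fix j
    show "(\<Sum>i\<in>UNIV. L2inner \<Omega> (vgrad \<Omega> u j i) (vgrad \<Omega> u j i)) \<le> (H1norm \<Omega> (\<lambda>x. u x $ j))^2"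
      unfolding h vgrad_def L2norm_sq by (simp add: L2inner_nonneg)
  qed
  finally show ?thesis .
qed


lemma aI_nonneg: "0 \<le> \<mu> \<Longrightarrow> 0 \<le> lam \<Longrightarrow> 0 \<le> aI \<Omega> \<mu> lam u u"
  unfolding aI_eq using SS_nonneg[of \<Omega> u] DD_nonneg[of \<Omega> u] by simp

lemma dI_nonneg: "0 < \<kappa> \<Longrightarrow> 0 \<le> \<xi> \<Longrightarrow> 0 \<le> dI \<Omega> \<kappa> \<xi> p p"
  unfolding dI_eq using GG_nonneg[of \<Omega> p] L2inner_nonneg[of \<Omega> p] by simp

lemma beta_DD:
  fixes \<phi> :: "real^'n \<Rightarrow> real^'n"
  assumes "H1v \<Omega> \<phi>" "\<mu> > 0" "lam > 0"
  shows "max \<mu> lam * DD \<Omega> \<phi> \<phi> \<le> real CARD('n) * aI \<Omega> \<mu> lam \<phi> \<phi>"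
proof -
  have n1: "real CARD('n) \<ge> 1" by simp
  have S: "0 \<le> SS \<Omega> \<phi> \<phi>" and D: "0 \<le> DD \<Omega> \<phi> \<phi>" by (rule SS_nonneg, rule DD_nonneg)
  have DS: "DD \<Omega> \<phi> \<phi> \<le> real CARD('n) * SS \<Omega> \<phi> \<phi>" by (rule DD_le_SS[OF assms(1)])
  have a: "aI \<Omega> \<mu> lam \<phi> \<phi> = 2 * \<mu> * SS \<Omega> \<phi> \<phi> + lam * DD \<Omega> \<phi> \<phi>" by (rule aI_eq)
  have a0: "0 \<le> aI \<Omega> \<mu> lam \<phi> \<phi>" using assms by (intro aI_nonneg) auto
  show ?thesis
  proof (cases "\<mu> \<le> lam")
    case True
    have "lam * DD \<Omega> \<phi> \<phi> \<le> aI \<Omega> \<mu> lam \<phi> \<phi>" using a S assms by simp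
    also have "\<dots> \<le> real CARD('n) * aI \<Omega> \<mu> lam \<phi> \<phi>" using n1 a0 by (simp add: mult_le_cancel_right1)
    finally show ?thesis using True by (simp add: max_def)
  next
    case False
    have "\<mu> * DD \<Omega> \<phi> \<phi> \<le> \<mu> * (real CARD('n) * SS \<Omega> \<phi> \<phi>)"
      using DS assms by (intro mult_left_mono) auto
    also have "\<dots> \<le> real CARD('n) * (2 * \<mu> * SS \<Omega> \<phi> \<phi>)" using S assms by simp
    also have "2 * \<mu> * SS \<Omega> \<phi> \<phi> \<le> aI \<Omega> \<mu> lam \<phi> \<phi>" using a D assms by simp
    then have "real CARD('n) * (2 * \<mu> * SS \<Omega> \<phi> \<phi>) \<le> real CARD('n) * aI \<Omega> \<mu> lam \<phi> \<phi>"
      by (intro mult_left_mono) auto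
    finally show ?thesis using False by (simp add: max_def)
  qed
qed

lemma aI_amgm:
  assumes "H1v \<Omega> u" "H1v \<Omega> \<phi>" "0 \<le> \<mu>" "0 \<le> lam" "t > 0"
  shows "\<bar>aI \<Omega> \<mu> lam u \<phi>\<bar> \<le> (t * aI \<Omega> \<mu> lam u u + aI \<Omega> \<mu> lam \<phi> \<phi> / t) / 2"
proof -
  have s: "\<bar>SS \<Omega> u \<phi>\<bar> \<le> (t * SS \<Omega> u u + SS \<Omega> \<phi> \<phi> / t) / 2" by (rule SS_amgm[OF assms(1,2,5)])
  have d: "\<bar>DD \<Omega> u \<phi>\<bar> \<le> (t * DD \<Omega> u u + DD \<Omega> \<phi> \<phi> / t) / 2" by (rule DD_amgm[OF assms(1,2,5)])
  have "\<bar>aI \<Omega> \<mu> lam u \<phi>\<bar> \<le> 2 * \<mu> * \<bar>SS \<Omega> u \<phi>\<bar> + lam * \<bar>DD \<Omega> u \<phi>\<bar>"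
    unfolding aI_eq using assms(3,4) by (rule_tac order_trans[OF abs_triangle_ineq]) (simp add: abs_mult)
  also have "\<dots> \<le> 2 * \<mu> * ((t * SS \<Omega> u u + SS \<Omega> \<phi> \<phi> / t) / 2) + lam * ((t * DD \<Omega> u u + DD \<Omega> \<phi> \<phi> / t) / 2)"
    using s d assms(3,4) by (intro add_mono mult_left_mono) auto
  also have "\<dots> = (t * aI \<Omega> \<mu> lam u u + aI \<Omega> \<mu> lam \<phi> \<phi> / t) / 2"
    unfolding aI_eq using assms(5) by (simp add: field_simps)
  finally show ?thesis .
qed

lemma dI_amgm:
  assumes "H1 \<Omega> p" "H1 \<Omega> q" "0 < \<kappa>" "0 \<le> \<xi>" "t > 0"
  shows "\<bar>dI \<Omega> \<kappa> \<xi> p q\<bar> \<le> (t * dI \<Omega> \<kappa> \<xi> p p + dI \<Omega> \<kappa> \<xi> q q / t) / 2"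
proof -
  have s: "\<bar>GG \<Omega> p q\<bar> \<le> (t * GG \<Omega> p p + GG \<Omega> q q / t) / 2" by (rule GG_amgm[OF assms(1,2,5)])
  have d: "\<bar>L2inner \<Omega> p q\<bar> \<le> (t * L2inner \<Omega> p p + L2inner \<Omega> q q / t) / 2"
    by (rule L2inner_amgm[OF H1_L2[OF assms(1)] H1_L2[OF assms(2)] assms(5)])
  have "\<bar>dI \<Omega> \<kappa> \<xi> p q\<bar> \<le> (1 / \<kappa>) * \<bar>GG \<Omega> p q\<bar> + \<xi> * \<bar>L2inner \<Omega> p q\<bar>"
    unfolding dI_eq using assms(3,4) by (rule_tac order_trans[OF abs_triangle_ineq]) (simp add: abs_mult)
  also have "\<dots> \<le> (1 / \<kappa>) * ((t * GG \<Omega> p p + GG \<Omega> q q / t) / 2) + \<xi> * ((t * L2inner \<Omega> p p + L2inner \<Omega> q q / t) / 2)"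
    using s d assms(3,4) by (intro add_mono mult_left_mono) auto
  also have "\<dots> = (t * dI \<Omega> \<kappa> \<xi> p p + dI \<Omega> \<kappa> \<xi> q q / t) / 2"
    unfolding dI_eq using assms(3,5) by (simp add: field_simps)
  finally show ?thesis .
qed

lemma bI_amgm1:
  fixes \<phi> :: "real^'n \<Rightarrow> real^'n"
  assumes "H1v \<Omega> \<phi>" "H1 \<Omega> p" "\<mu> > 0" "lam > 0" "t > 0"
  shows "\<bar>bI \<Omega> \<phi> p\<bar> \<le> (t * (L2inner \<Omega> p p / max \<mu> lam) + real CARD('n) * aI \<Omega> \<mu> lam \<phi> \<phi> / t) / 2"
proof -
  define \<beta> where "\<beta> = max \<mu> lam"
  have b: "\<beta> > 0" using assms by (simp add: \<beta>_def)
  have s: "t / \<beta> > 0" using b assms by simp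
  have "\<bar>bI \<Omega> \<phi> p\<bar> = \<bar>L2inner \<Omega> p (wdiv \<Omega> \<phi>)\<bar>" unfolding bI_def by (simp add: L2inner_sym)
  also have "\<dots> \<le> ((t / \<beta>) * L2inner \<Omega> p p + DD \<Omega> \<phi> \<phi> / (t / \<beta>)) / 2"
    unfolding DD_def by (rule L2inner_amgm[OF H1_L2[OF assms(2)] wdiv_L2[OF assms(1)] s])
  also have "DD \<Omega> \<phi> \<phi> / (t / \<beta>) = (\<beta> * DD \<Omega> \<phi> \<phi>) / t" using b by simp
  also have "\<dots> \<le> real CARD('n) * aI \<Omega> \<mu> lam \<phi> \<phi> / t"
    using beta_DD[OF assms(1,3,4)] assms(5) unfolding \<beta>_def by (intro divide_right_mono) auto
  finally show ?thesis unfolding \<beta>_def by (simp add: divide_right_mono)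
qed

lemma bI_amgm2:
  fixes u :: "real^'n \<Rightarrow> real^'n"
  assumes "H1v \<Omega> u" "H1 \<Omega> q" "\<mu> > 0" "lam > 0" "t > 0"
  shows "\<bar>bI \<Omega> u q\<bar> \<le> (t * (real CARD('n) * aI \<Omega> \<mu> lam u u) + (L2inner \<Omega> q q / max \<mu> lam) / t) / 2"
proof -
  define \<beta> where "\<beta> = max \<mu> lam"
  have b: "\<beta> > 0" using assms by (simp add: \<beta>_def)
  have s: "t * \<beta> > 0" using b assms by simp
  have "\<bar>bI \<Omega> u q\<bar> = \<bar>L2inner \<Omega> (wdiv \<Omega> u) q\<bar>" unfolding bI_def ..
  also have "\<dots> \<le> ((t * \<beta>) * DD \<Omega> u u + L2inner \<Omega> q q / (t * \<beta>)) / 2"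
    unfolding DD_def by (rule L2inner_amgm[OF wdiv_L2[OF assms(1)] H1_L2[OF assms(2)] s])
  also have "(t * \<beta>) * DD \<Omega> u u = t * (\<beta> * DD \<Omega> u u)" by simp
  also have "\<dots> \<le> t * (real CARD('n) * aI \<Omega> \<mu> lam u u)"
    using beta_DD[OF assms(1,3,4)] assms(5) unfolding \<beta>_def by (intro mult_left_mono) auto
  finally show ?thesis unfolding \<beta>_def by (simp add: mult.commute)
qed

lemma prod_normI_sq:
  assumes "0 < \<mu>" "0 < lam" "0 < \<kappa>" "0 \<le> \<xi>"
  shows "(prod_normI \<Omega> \<mu> lam \<kappa> \<xi> up)^2 =
    aI \<Omega> \<mu> lam (fst up) (fst up) + L2inner \<Omega> (snd up) (snd up) / max \<mu> lam + dI \<Omega> \<kappa> \<xi> (snd up) (snd up)"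
proof -
  have "0 \<le> aI \<Omega> \<mu> lam (fst up) (fst up) + L2inner \<Omega> (snd up) (snd up) / max \<mu> lam + dI \<Omega> \<kappa> \<xi> (snd up) (snd up)"
    using aI_nonneg[of \<mu> lam] dI_nonneg[of \<kappa> \<xi>] L2inner_nonneg assms
    by (intro add_nonneg_nonneg divide_nonneg_pos) auto
  then show ?thesis unfolding prod_normI_def L2norm_sq by simp
qed

lemma bounded_LI:
  fixes u \<phi> :: "real^'n \<Rightarrow> real^'n"
  assumes "H1v \<Omega> u" "H1 \<Omega> p" "H1v \<Omega> \<phi>" "H1 \<Omega> q"
    and pos: "0 < \<mu>" "0 < lam" "0 < \<kappa>" "0 < \<xi>"
  shows "\<bar>LI \<Omega> \<mu> lam \<kappa> \<xi> (u, p) (\<phi>, q)\<bar> \<le>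
    (real CARD('n) + 1) * prod_normI \<Omega> \<mu> lam \<kappa> \<xi> (u, p) * prod_normI \<Omega> \<mu> lam \<kappa> \<xi> (\<phi>, q)"
proof -
  define n where "n = real CARD('n)"
  have n1: "n \<ge> 1" unfolding n_def by simp
  define A1 where "A1 = aI \<Omega> \<mu> lam u u"
  define A2 where "A2 = aI \<Omega> \<mu> lam \<phi> \<phi>"
  define P1 where "P1 = L2inner \<Omega> p p / max \<mu> lam"
  define P2 where "P2 = L2inner \<Omega> q q / max \<mu> lam"
  define D1 where "D1 = dI \<Omega> \<kappa> \<xi> p p"
  define D2 where "D2 = dI \<Omega> \<kappa> \<xi> q q"
  have A1: "0 \<le> A1" unfolding A1_def using pos by (intro aI_nonneg) auto
  have A2: "0 \<le> A2" unfolding A2_def using pos by (intro aI_nonneg) auto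
  have D1: "0 \<le> D1" unfolding D1_def using pos by (intro dI_nonneg) auto
  have D2: "0 \<le> D2" unfolding D2_def using pos by (intro dI_nonneg) auto
  have P1: "0 \<le> P1" and P2: "0 \<le> P2" unfolding P1_def P2_def using L2inner_nonneg pos
    by (auto intro!: divide_nonneg_pos)
  have N1: "(prod_normI \<Omega> \<mu> lam \<kappa> \<xi> (u, p))^2 = A1 + P1 + D1"
    unfolding A1_def P1_def D1_def
    using prod_normI_sq[OF pos(1,2,3) less_imp_le[OF pos(4)], where up="(u,p)" and \<Omega>=\<Omega>] by simp
  have N2: "(prod_normI \<Omega> \<mu> lam \<kappa> \<xi> (\<phi>, q))^2 = A2 + P2 + D2"
    unfolding A2_def P2_def D2_def
    using prod_normI_sq[OF pos(1,2,3) less_imp_le[OF pos(4)], where up="(\<phi>,q)" and \<Omega>=\<Omega>] by simp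
  have key: "\<bar>LI \<Omega> \<mu> lam \<kappa> \<xi> (u, p) (\<phi>, q)\<bar> / (n + 1) \<le> (t * (A1 + P1 + D1) + (A2 + P2 + D2) / t) / 2"
    if t: "t > 0" for t
  proof -
    have e1: "\<bar>aI \<Omega> \<mu> lam u \<phi>\<bar> \<le> (t * A1 + A2 / t) / 2"
      unfolding A1_def A2_def using aI_amgm[OF assms(1,3)] pos t by simp
    have e2: "\<bar>bI \<Omega> \<phi> p\<bar> \<le> (t * P1 + n * A2 / t) / 2"
      unfolding P1_def A2_def n_def using bI_amgm1[OF assms(3,2) pos(1,2) t] .
    have e3: "\<bar>bI \<Omega> u q\<bar> \<le> (t * (n * A1) + P2 / t) / 2"
      unfolding P2_def A1_def n_def using bI_amgm2[OF assms(1,4) pos(1,2) t] .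
    have e4: "\<bar>dI \<Omega> \<kappa> \<xi> p q\<bar> \<le> (t * D1 + D2 / t) / 2"
      unfolding D1_def D2_def using dI_amgm[OF assms(2,4) pos(3)] pos(4) t by simp
    have "\<bar>LI \<Omega> \<mu> lam \<kappa> \<xi> (u, p) (\<phi>, q)\<bar> \<le>
        \<bar>aI \<Omega> \<mu> lam u \<phi>\<bar> + \<bar>bI \<Omega> \<phi> p\<bar> + \<bar>bI \<Omega> u q\<bar> + \<bar>dI \<Omega> \<kappa> \<xi> p q\<bar>"
      unfolding LI_def by simp
    also have "\<dots> \<le> (t * ((1 + n) * A1 + P1 + D1) + ((1 + n) * A2 + P2 + D2) / t) / 2"
      using e1 e2 e3 e4 t by (simp add: field_simps)
    also have "\<dots> \<le> (t * ((n + 1) * (A1 + P1 + D1)) + ((n + 1) * (A2 + P2 + D2)) / t) / 2"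
    proof -
      have "(1 + n) * A1 + P1 + D1 \<le> (n + 1) * (A1 + P1 + D1)"
        using n1 A1 P1 D1 by (simp add: algebra_simps)
      moreover have "(1 + n) * A2 + P2 + D2 \<le> (n + 1) * (A2 + P2 + D2)"
        using n1 A2 P2 D2 by (simp add: algebra_simps)
      ultimately show ?thesis using t by (intro divide_right_mono add_mono mult_left_mono) auto
    qed
    also have "\<dots> = (n + 1) * ((t * (A1 + P1 + D1) + (A2 + P2 + D2) / t) / 2)"
      by (simp add: field_simps)
    finally show ?thesis using n1 by (simp add: field_simps)
  qed
  have "\<bar>LI \<Omega> \<mu> lam \<kappa> \<xi> (u, p) (\<phi>, q)\<bar> / (n + 1) \<le> sqrt (A1 + P1 + D1) * sqrt (A2 + P2 + D2)"
    by (rule amgm_opt[OF key]) (use A1 P1 D1 A2 P2 D2 in auto)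
  also have "sqrt (A1 + P1 + D1) = prod_normI \<Omega> \<mu> lam \<kappa> \<xi> (u, p)"
    unfolding prod_normI_def A1_def P1_def D1_def L2norm_sq by simp
  also have "sqrt (A2 + P2 + D2) = prod_normI \<Omega> \<mu> lam \<kappa> \<xi> (\<phi>, q)"
    unfolding prod_normI_def A2_def P2_def D2_def L2norm_sq by simp
  finally show ?thesis using n1 unfolding n_def by (simp add: field_simps)
qed


lemma weak_partial_zero: "weak_partial \<Omega> (\<lambda>x. 0) i (\<lambda>x. 0)"
  unfolding weak_partial_def by simp

lemma wpd_neg_ae:
  fixes \<Omega> :: "(real^'n) set"
  assumes "open \<Omega>" "bounded \<Omega>" "H1 \<Omega> p" "H1 \<Omega> (\<lambda>x. -1 * p x)"
  shows "AE x in lebesgue. x \<in> \<Omega> \<longrightarrow> wpd \<Omega> (\<lambda>x. -1 * p x) i x = -1 * wpd \<Omega> p i x"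
  by (rule wp_unique[OF assms(1,2) H1_wpd(1)[OF assms(3)] H1_wpd(1)[OF assms(4)]
        H1_wpd(2)[OF assms(3)] H1_wpd(2)[OF assms(4)]]) simp

lemma wpd_zero_ae:
  fixes \<Omega> :: "(real^'n) set"
  assumes "open \<Omega>" "bounded \<Omega>" "H1 \<Omega> (\<lambda>x. 0)"
  shows "AE x in lebesgue. x \<in> \<Omega> \<longrightarrow> wpd \<Omega> (\<lambda>x. 0) i x = 0"
proof -
  have "AE x in lebesgue. x \<in> \<Omega> \<longrightarrow> wpd \<Omega> (\<lambda>x. 0) i x = 0 * (0::real)"
    by (rule wp_unique[OF assms(1,2) L2_zero H1_wpd(1)[OF assms(3)] weak_partial_zero
        H1_wpd(2)[OF assms(3)]]) simp
  then show ?thesis by simp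
qed

lemma dI_neg:
  fixes \<Omega> :: "(real^'n) set"
  assumes "open \<Omega>" "bounded \<Omega>" "H1 \<Omega> p" "H1 \<Omega> (\<lambda>x. -1 * p x)"
  shows "dI \<Omega> \<kappa> \<xi> p (\<lambda>x. -1 * p x) = - dI \<Omega> \<kappa> \<xi> p p"
    and "dI \<Omega> \<kappa> \<xi> (\<lambda>x. -1 * p x) (\<lambda>x. -1 * p x) = dI \<Omega> \<kappa> \<xi> p p"
proof -
  let ?np = "\<lambda>x. -1 * p x"
  have L1: "L2 \<Omega> (wpd \<Omega> p i)" for i using H1_wpd(1)[OF assms(3)] .
  have L2': "L2 \<Omega> (wpd \<Omega> ?np i)" for i using H1_wpd(1)[OF assms(4)] .
  have L3: "L2 \<Omega> (\<lambda>x. -1 * wpd \<Omega> p i x)" for i by (rule L2_cmult[OF L1])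
  note L = L1 L2' L3
  have ae: "AE x in lebesgue. x \<in> \<Omega> \<longrightarrow> wpd \<Omega> ?np i x = -1 * wpd \<Omega> p i x" for i
    by (rule wpd_neg_ae[OF assms])
  have g1: "L2inner \<Omega> (wpd \<Omega> p i) (wpd \<Omega> ?np i) = - L2inner \<Omega> (wpd \<Omega> p i) (wpd \<Omega> p i)" for i
  proof -
    have "L2inner \<Omega> (wpd \<Omega> p i) (wpd \<Omega> ?np i) = L2inner \<Omega> (wpd \<Omega> p i) (\<lambda>x. -1 * wpd \<Omega> p i x)"
      by (rule L2inner_ae_right[OF L(1) L(2) L(3) ae])
    then show ?thesis unfolding L2inner_cmult_right by simp
  qed
  have g2: "L2inner \<Omega> (wpd \<Omega> ?np i) (wpd \<Omega> ?np i) = L2inner \<Omega> (wpd \<Omega> p i) (wpd \<Omega> p i)" for i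
  proof -
    have "L2inner \<Omega> (wpd \<Omega> ?np i) (wpd \<Omega> ?np i) = L2inner \<Omega> (\<lambda>x. -1 * wpd \<Omega> p i x) (wpd \<Omega> ?np i)"
      by (rule L2inner_ae_left[OF L(2) L(3) L(2) ae])
    also have "\<dots> = L2inner \<Omega> (\<lambda>x. -1 * wpd \<Omega> p i x) (\<lambda>x. -1 * wpd \<Omega> p i x)"
      by (rule L2inner_ae_right[OF L(3) L(2) L(3) ae])
    finally show ?thesis unfolding L2inner_cmult_right L2inner_cmult_left by simp
  qed
  show "dI \<Omega> \<kappa> \<xi> p ?np = - dI \<Omega> \<kappa> \<xi> p p"
    unfolding dI_eq GG_def L2inner_cmult_right using g1 by (simp add: sum_negf)
  show "dI \<Omega> \<kappa> \<xi> ?np ?np = dI \<Omega> \<kappa> \<xi> p p"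
    unfolding dI_eq GG_def L2inner_cmult_right L2inner_cmult_left using g2 by simp
qed

lemma dI_zero:
  fixes \<Omega> :: "(real^'n) set"
  assumes "open \<Omega>" "bounded \<Omega>" "H1 \<Omega> p" "H1 \<Omega> (\<lambda>x. 0)"
  shows "dI \<Omega> \<kappa> \<xi> p (\<lambda>x. 0) = 0" and "dI \<Omega> \<kappa> \<xi> (\<lambda>x. 0) (\<lambda>x. 0) = 0"
proof -
  have ae: "AE x in lebesgue. x \<in> \<Omega> \<longrightarrow> wpd \<Omega> (\<lambda>x. 0) i x = 0" for i
    by (rule wpd_zero_ae[OF assms(1,2,4)])
  have L0: "L2 \<Omega> (wpd \<Omega> (\<lambda>x. 0) i)" for i using H1_wpd(1)[OF assms(4)] .
  have g1: "L2inner \<Omega> (wpd \<Omega> q i) (wpd \<Omega> (\<lambda>x. 0) i) = 0" if "L2 \<Omega> (wpd \<Omega> q i)" for q i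
  proof -
    have "L2inner \<Omega> (wpd \<Omega> q i) (wpd \<Omega> (\<lambda>x. 0) i) = L2inner \<Omega> (wpd \<Omega> q i) (\<lambda>x. 0)"
      by (rule L2inner_ae_right[OF that L0 L2_zero ae])
    then show ?thesis by (simp add: L2inner_zero_right)
  qed
  show "dI \<Omega> \<kappa> \<xi> p (\<lambda>x. 0) = 0"
    unfolding dI_eq GG_def using g1 H1_wpd(1)[OF assms(3)] by (simp add: L2inner_zero_right)
  show "dI \<Omega> \<kappa> \<xi> (\<lambda>x. 0) (\<lambda>x. 0) = 0"
    unfolding dI_eq GG_def using g1 L0 by (simp add: L2inner_zero_right)
qed

lemma L2inner_neg_self: "L2inner \<Omega> (\<lambda>x. -1 * p x) (\<lambda>x. -1 * p x) = L2inner \<Omega> p p"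
  unfolding L2inner_cmult_left L2inner_cmult_right by simp

lemma bI_neg: "bI \<Omega> u (\<lambda>x. -1 * p x) = - bI \<Omega> u p"
  unfolding bI_def L2inner_cmult_right by simp

lemma bI_zero: "bI \<Omega> u (\<lambda>x. 0) = 0"
  unfolding bI_def by (simp add: L2inner_zero_right)

lemma aI_le_H1vnorm:
  fixes w :: "real^'n \<Rightarrow> real^'n"
  assumes "H1v \<Omega> w" "0 < \<mu>" "0 < lam"
  shows "aI \<Omega> \<mu> lam w w \<le> (2 + real CARD('n)) * max \<mu> lam * (H1vnorm \<Omega> w)^2"
proof -
  have S: "SS \<Omega> w w \<le> GV \<Omega> w" by (rule SS_le_GV[OF assms(1)])
  have D: "DD \<Omega> w w \<le> real CARD('n) * SS \<Omega> w w" by (rule DD_le_SS[OF assms(1)])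
  have G: "GV \<Omega> w \<le> (H1vnorm \<Omega> w)^2" by (rule GV_le_H1vnorm[OF assms(1)])
  have S0: "0 \<le> SS \<Omega> w w" by (rule SS_nonneg)
  have G0: "0 \<le> GV \<Omega> w" using S0 S by simp
  have "aI \<Omega> \<mu> lam w w = 2 * \<mu> * SS \<Omega> w w + lam * DD \<Omega> w w" by (rule aI_eq)
  also have "\<dots> \<le> 2 * \<mu> * GV \<Omega> w + lam * (real CARD('n) * GV \<Omega> w)"
  proof (intro add_mono mult_left_mono)
    show "DD \<Omega> w w \<le> real CARD('n) * GV \<Omega> w"
      using D S by (meson mult_left_mono of_nat_0_le_iff order_trans)
  qed (use S assms in auto)
  also have "\<dots> \<le> 2 * max \<mu> lam * GV \<Omega> w + max \<mu> lam * (real CARD('n) * GV \<Omega> w)"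
    using G0 by (intro add_mono mult_right_mono mult_left_mono) auto
  also have "\<dots> = (2 + real CARD('n)) * max \<mu> lam * GV \<Omega> w" by (simp add: algebra_simps)
  also have "\<dots> \<le> (2 + real CARD('n)) * max \<mu> lam * (H1vnorm \<Omega> w)^2"
    using G assms by (intro mult_left_mono) auto
  finally show ?thesis .
qed


definition c0IS :: "real \<Rightarrow> real \<Rightarrow> real" where
  "c0IS \<gamma> n = \<gamma> / (2 * sqrt (2 + n))"

definition epsIS :: "real \<Rightarrow> real \<Rightarrow> real" where
  "epsIS \<gamma> n = min (1/2) ((c0IS \<gamma> n)^2 / 8)"

definition cIS :: "real \<Rightarrow> real \<Rightarrow> real" where
  "cIS \<gamma> n = min (epsIS \<gamma> n) (c0IS \<gamma> n / (2 * sqrt 2))"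

lemma c0IS_pos: "\<gamma> > 0 \<Longrightarrow> n \<ge> 0 \<Longrightarrow> c0IS \<gamma> n > 0"
  unfolding c0IS_def by simp

lemma cIS_pos: "\<gamma> > 0 \<Longrightarrow> n \<ge> 0 \<Longrightarrow> cIS \<gamma> n > 0"
  unfolding cIS_def epsIS_def using c0IS_pos[of \<gamma> n] by simp

lemma infsup_LI:
  fixes \<Omega> :: "(real^'n) set" and U :: "(real^'n \<Rightarrow> real^'n) set" and Q :: "(real^'n \<Rightarrow> real) set"
  assumes \<Omega>: "open \<Omega>" "bounded \<Omega>" and \<gamma>: "\<gamma> > 0"
    and HU: "\<And>u. u \<in> U \<Longrightarrow> H1v \<Omega> u" and HQ: "\<And>p. p \<in> Q \<Longrightarrow> H1 \<Omega> p"
    and Qneg: "\<And>p. p \<in> Q \<Longrightarrow> (\<lambda>x. -1 * p x) \<in> Q" and Q0: "(\<lambda>x. 0) \<in> Q"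
    and ker: "\<forall>p\<in>kerI \<Omega> U Q. L2norm \<Omega> p = 0"
    and IS: "\<forall>p\<in>kerI_perp \<Omega> U Q. L2norm \<Omega> p > 0 \<longrightarrow>
          (\<forall>t < \<gamma> * L2norm \<Omega> p. \<exists>u\<in>U. H1vnorm \<Omega> u > 0 \<and> bI \<Omega> u p > t * H1vnorm \<Omega> u)"
    and pos: "0 < \<mu>" "0 < lam" "0 < \<kappa>" "0 < \<xi>"
    and up: "u \<in> U" "p \<in> Q" and Npos: "prod_normI \<Omega> \<mu> lam \<kappa> \<xi> (u, p) > 0"
    and tc: "t < cIS \<gamma> (real CARD('n)) * prod_normI \<Omega> \<mu> lam \<kappa> \<xi> (u, p)"
  shows "\<exists>\<phi>q\<in>U \<times> Q. prod_normI \<Omega> \<mu> lam \<kappa> \<xi> \<phi>q > 0 \<and>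
            LI \<Omega> \<mu> lam \<kappa> \<xi> (u, p) \<phi>q > t * prod_normI \<Omega> \<mu> lam \<kappa> \<xi> \<phi>q"
proof -
  define n where "n = real CARD('n)"
  have n0: "n \<ge> 0" unfolding n_def by simp
  define N where "N = prod_normI \<Omega> \<mu> lam \<kappa> \<xi> (u, p)"
  define \<beta> where "\<beta> = max \<mu> lam"
  have \<beta>: "\<beta> > 0" using pos unfolding \<beta>_def by simp
  define A where "A = aI \<Omega> \<mu> lam u u"
  define P where "P = L2inner \<Omega> p p / \<beta>"
  define D where "D = dI \<Omega> \<kappa> \<xi> p p"
  define c0 where "c0 = c0IS \<gamma> n"
  define \<epsilon> where "\<epsilon> = epsIS \<gamma> n"
  define c where "c = cIS \<gamma> n"
  have c0: "c0 > 0" unfolding c0_def using c0IS_pos[OF \<gamma> n0] .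
  have c_le: "c \<le> \<epsilon>" "c \<le> c0 / (2 * sqrt 2)" unfolding c_def \<epsilon>_def c0_def cIS_def by auto
  have eps: "\<epsilon> \<le> 1/2" "\<epsilon> \<le> c0^2 / 8" unfolding \<epsilon>_def epsIS_def c0_def by auto
  have eps0: "\<epsilon> > 0" unfolding \<epsilon>_def epsIS_def using c0 unfolding c0_def by simp
  have Hu: "H1v \<Omega> u" and Hp: "H1 \<Omega> p" using HU HQ up by auto
  have A0: "0 \<le> A" unfolding A_def using pos by (intro aI_nonneg) auto
  have D0: "0 \<le> D" unfolding D_def using pos by (intro dI_nonneg) auto
  have pp0: "0 \<le> L2inner \<Omega> p p" by (rule L2inner_nonneg)
  have P0: "0 \<le> P" unfolding P_def using pp0 \<beta> by simp
  have N0: "N > 0" using Npos unfolding N_def .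
  have N2: "N^2 = A + P + D"
    unfolding N_def A_def P_def D_def \<beta>_def
    using prod_normI_sq[OF pos(1,2,3) less_imp_le[OF pos(4)], where up="(u,p)" and \<Omega>=\<Omega>] by simp
  have tc': "t < c * N" using tc unfolding c_def N_def n_def .
  show ?thesis
  proof (cases "\<epsilon> * N^2 \<le> A + D")
    case True
    define np where "np = (\<lambda>x. -1 * p x)"
    have npQ: "np \<in> Q" unfolding np_def using Qneg up by simp
    have Hnp: "H1 \<Omega> np" using HQ npQ by simp
    have dneg: "dI \<Omega> \<kappa> \<xi> p np = - D" "dI \<Omega> \<kappa> \<xi> np np = D"
      unfolding np_def D_def using dI_neg[OF \<Omega> Hp Hnp[unfolded np_def]] by auto
    have L: "LI \<Omega> \<mu> lam \<kappa> \<xi> (u, p) (u, np) = A + D"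
      unfolding LI_def A_def using dneg bI_neg[of \<Omega> u p] unfolding np_def by simp
    have Nn: "prod_normI \<Omega> \<mu> lam \<kappa> \<xi> (u, np) = N"
    proof -
      have "L2norm \<Omega> np = L2norm \<Omega> p" unfolding L2norm_def np_def L2inner_neg_self ..
      then show ?thesis unfolding N_def prod_normI_def using dneg(2) unfolding D_def by simp
    qed
    have "t * N < c * N * N" using tc' N0 by (intro mult_strict_right_mono) auto
    also have "\<dots> \<le> \<epsilon> * N^2" using c_le(1) N0 by (simp add: power2_eq_square mult_right_mono)
    also have "\<dots> \<le> A + D" by (rule True)
    finally have "t * N < A + D" .
    then show ?thesis using L Nn N0 up npQ by (intro bexI[of _ "(u, np)"]) auto
  next
    case False
    then have AD: "A + D < \<epsilon> * N^2" by simp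
    have PN: "N^2 < 2 * P"
    proof -
      have "\<epsilon> * N^2 \<le> 1/2 * N^2" using eps(1) by (intro mult_right_mono) auto
      then have "A + D < N^2 / 2" using AD by simp
      then show ?thesis using N2 by simp
    qed
    have N2pos: "N^2 > 0" using N0 by simp
    have Ppos: "P > 0" using PN N2pos by linarith
    have pp: "L2inner \<Omega> p p = \<beta> * P" unfolding P_def using \<beta> by simp
    have ppos: "L2inner \<Omega> p p > 0" using pp \<beta> Ppos by simp
    have Lp: "L2norm \<Omega> p = sqrt \<beta> * sqrt P" unfolding L2norm_def pp by (simp add: real_sqrt_mult)
    have Lppos: "L2norm \<Omega> p > 0" using Lp \<beta> Ppos by simp
    have pperp: "p \<in> kerI_perp \<Omega> U Q"
      unfolding kerI_perp_def
    proof (intro CollectI conjI ballI)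
      show "p \<in> Q" by (rule up(2))
      fix k assume k: "k \<in> kerI \<Omega> U Q"
      have kQ: "k \<in> Q" using k unfolding kerI_def by simp
      have "sqrt (L2inner \<Omega> k k) = 0" using ker k unfolding L2norm_def by simp
      moreover have "\<bar>L2inner \<Omega> p k\<bar> \<le> sqrt (L2inner \<Omega> p p) * sqrt (L2inner \<Omega> k k)"
        by (rule L2inner_cs[OF H1_L2[OF Hp] H1_L2[OF HQ[OF kQ]]])
      ultimately show "L2inner \<Omega> p k = 0" by simp
    qed
    define t0 where "t0 = \<gamma> / 2 * L2norm \<Omega> p"
    have t0: "t0 < \<gamma> * L2norm \<Omega> p" "t0 > 0" unfolding t0_def using \<gamma> Lppos by auto
    obtain w where wU: "w \<in> U" and Hw: "H1vnorm \<Omega> w > 0" and bw: "bI \<Omega> w p > t0 * H1vnorm \<Omega> w"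
      using IS pperp Lppos t0(1) by blast
    define H where "H = H1vnorm \<Omega> w"
    have Hw1: "H1v \<Omega> w" using HU wU by simp
    define Aw where "Aw = aI \<Omega> \<mu> lam w w"
    define K where "K = 2 + n"
    have K: "K > 0" unfolding K_def using n0 by simp
    have AwK: "Aw \<le> K * \<beta> * H^2"
      unfolding Aw_def K_def \<beta>_def H_def n_def using aI_le_H1vnorm[OF Hw1 pos(1,2)] .
    have Aw0: "0 \<le> Aw" unfolding Aw_def using pos by (intro aI_nonneg) auto
    have "t0 * H1vnorm \<Omega> w > 0" using t0(2) Hw by simp
    then have bwpos: "bI \<Omega> w p > 0" using bw by simp
    have Awpos: "Aw > 0"
    proof (rule ccontr)
      assume "\<not> Aw > 0"
      then have "Aw = 0" using Aw0 by simp
      then have "\<beta> * DD \<Omega> w w \<le> 0" using beta_DD[OF Hw1 pos(1,2)] unfolding Aw_def \<beta>_def by simp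
      then have "DD \<Omega> w w = 0" using DD_nonneg[of \<Omega> w] \<beta> by (simp add: mult_le_0_iff)
      moreover have "\<bar>bI \<Omega> w p\<bar> \<le> sqrt (DD \<Omega> w w) * sqrt (L2inner \<Omega> p p)"
        unfolding bI_def DD_def by (rule L2inner_cs[OF wdiv_L2[OF Hw1] H1_L2[OF Hp]])
      ultimately show False using bwpos by simp
    qed
    define Nw where "Nw = sqrt Aw"
    have Nwpos: "Nw > 0" unfolding Nw_def using Awpos by simp
    have Q0': "H1 \<Omega> (\<lambda>x. 0)" using HQ Q0 by simp
    have dz: "dI \<Omega> \<kappa> \<xi> p (\<lambda>x. 0) = 0" "dI \<Omega> \<kappa> \<xi> (\<lambda>x. 0) (\<lambda>x. 0) = 0"
      using dI_zero[OF \<Omega> Hp Q0'] by auto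
    have Nw_eq: "prod_normI \<Omega> \<mu> lam \<kappa> \<xi> (w, \<lambda>x. 0) = Nw"
      unfolding prod_normI_def Nw_def Aw_def L2norm_def using dz(2)
      by (simp add: L2inner_zero_right)
    have Lw: "LI \<Omega> \<mu> lam \<kappa> \<xi> (u, p) (w, \<lambda>x. 0) = aI \<Omega> \<mu> lam u w + bI \<Omega> w p"
      unfolding LI_def using dz(1) bI_zero[of \<Omega> u] by simp
    have auw: "\<bar>aI \<Omega> \<mu> lam u w\<bar> \<le> sqrt A * Nw"
      unfolding A_def Nw_def Aw_def
      by (rule amgm_opt[OF aI_amgm[OF Hu Hw1]]) (use pos in \<open>auto intro: aI_nonneg\<close>)
    have NwH: "Nw \<le> sqrt K * sqrt \<beta> * H"
    proof -
      have "Nw \<le> sqrt (K * \<beta> * H^2)" unfolding Nw_def using AwK by simp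
      also have "\<dots> = sqrt K * sqrt \<beta> * H" using Hw unfolding H_def by (simp add: real_sqrt_mult)
      finally show ?thesis .
    qed
    have skb: "sqrt K * sqrt \<beta> > 0" using K \<beta> by simp
    have bw2: "bI \<Omega> w p > c0 * sqrt P * Nw"
    proof -
      have "c0 * sqrt P * Nw \<le> c0 * sqrt P * (sqrt K * sqrt \<beta> * H)"
        using NwH c0 P0 by (intro mult_left_mono) auto
      also have "\<dots> = t0 * H"
        unfolding c0_def c0IS_def t0_def Lp K_def using K \<beta> n0 by (simp add: field_simps)
      finally show ?thesis using bw unfolding H_def by simp
    qed
    have sA: "sqrt A \<le> c0 / 2 * sqrt P"
    proof -
      have "A < \<epsilon> * N^2" using AD D0 by simp
      also have "\<dots> \<le> \<epsilon> * (2 * P)" using PN eps eps0 c0 by (intro mult_left_mono) (auto simp: order.strict_implies_order)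
      also have "\<dots> \<le> (c0^2 / 8) * (2 * P)" using eps(2) P0 by (intro mult_right_mono) auto
      also have "\<dots> = (c0 / 2)^2 * P" by (simp add: power2_eq_square)
      finally have "A \<le> (c0 / 2)^2 * P" by simp
      then have "sqrt A \<le> sqrt ((c0 / 2)^2 * P)" by simp
      also have "\<dots> = c0 / 2 * sqrt P" using c0 by (simp add: real_sqrt_mult)
      finally show ?thesis .
    qed
    have sP: "N / sqrt 2 \<le> sqrt P"
    proof -
      have "N^2 / 2 \<le> P" using PN by simp
      then have "sqrt (N^2 / 2) \<le> sqrt P" by simp
      moreover have "sqrt (N^2 / 2) = N / sqrt 2" using N0 by (simp add: real_sqrt_divide)
      ultimately show ?thesis by simp
    qed
    have "LI \<Omega> \<mu> lam \<kappa> \<xi> (u, p) (w, \<lambda>x. 0) > - (sqrt A * Nw) + c0 * sqrt P * Nw"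
      using Lw auw bw2 by linarith
    moreover have "- (sqrt A * Nw) \<ge> - (c0 / 2 * sqrt P * Nw)"
      using sA Nwpos by (simp add: mult_right_mono)
    ultimately have "LI \<Omega> \<mu> lam \<kappa> \<xi> (u, p) (w, \<lambda>x. 0) > c0 / 2 * sqrt P * Nw" by linarith
    moreover have "c0 / 2 * sqrt P * Nw \<ge> c0 / 2 * (N / sqrt 2) * Nw"
      using sP c0 Nwpos by (intro mult_right_mono mult_left_mono) auto
    moreover have "c0 / 2 * (N / sqrt 2) * Nw = (c0 / (2 * sqrt 2)) * N * Nw" by simp
    moreover have "(c0 / (2 * sqrt 2)) * N * Nw \<ge> c * N * Nw"
      using c_le(2) N0 Nwpos by (intro mult_right_mono) auto
    moreover have "c * N * Nw > t * Nw" using tc' Nwpos by (intro mult_strict_right_mono) auto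
    ultimately have "LI \<Omega> \<mu> lam \<kappa> \<xi> (u, p) (w, \<lambda>x. 0) > t * Nw" by linarith
    then show ?thesis using Nw_eq Nwpos wU Q0 by (intro bexI[of _ "(w, \<lambda>x. 0)"]) auto
  qed
qed


theorem theorem4:
  fixes \<Omega> :: "(real^'n) set"
    and \<Gamma>Du \<Gamma>Nu \<Gamma>Dv \<Gamma>Nv :: "(real^'n) set"
    and \<gamma> :: real
  assumes dim: "CARD('n) = 2 \<or> CARD('n) = 3"
    and dom: "lipschitz_domain \<Omega>" "simply_connected \<Omega>"
    and bdu: "\<Gamma>Du \<subseteq> frontier \<Omega>" "\<Gamma>Nu \<subseteq> frontier \<Omega>"
             "frontier \<Omega> = closure \<Gamma>Du \<union> closure \<Gamma>Nu" "\<Gamma>Du \<inter> \<Gamma>Nu = {}"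
    and bdv: "\<Gamma>Dv \<subseteq> frontier \<Omega>" "\<Gamma>Nv \<subseteq> frontier \<Omega>"
             "frontier \<Omega> = closure \<Gamma>Dv \<union> closure \<Gamma>Nv" "\<Gamma>Dv \<inter> \<Gamma>Nv = {}"
    and \<gamma>pos: "\<gamma> > 0"
  shows "\<exists>C c. C > 0 \<and> c > 0 \<and>
    (\<forall>U Q.
       closed_subspace_v \<Omega> (H1_D \<Omega> \<Gamma>Du) U \<longrightarrow>
       closed_subspace_s \<Omega> (H1_P \<Omega> \<Gamma>Nv) Q \<longrightarrow>
       (\<forall>p\<in>kerI \<Omega> U Q. L2norm \<Omega> p = 0) \<longrightarrow>
       (\<forall>p\<in>kerI_perp \<Omega> U Q. L2norm \<Omega> p > 0 \<longrightarrow>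
          (\<forall>t < \<gamma> * L2norm \<Omega> p. \<exists>u\<in>U. H1vnorm \<Omega> u > 0 \<and> bI \<Omega> u p > t * H1vnorm \<Omega> u)) \<longrightarrow>
       (\<forall>\<mu> lam \<kappa> \<xi>. \<mu> > 0 \<longrightarrow> lam > 0 \<longrightarrow> \<kappa> > 0 \<longrightarrow> \<xi> > 0 \<longrightarrow>
          well_posed_with \<Omega> U Q \<mu> lam \<kappa> \<xi> C c))"
proof -
  have \<Omega>: "open \<Omega>" "bounded \<Omega>" using dom(1) unfolding lipschitz_domain_def by auto
  define C where "C = real CARD('n) + 1"
  define c where "c = cIS \<gamma> (real CARD('n))"
  have C0: "C > 0" unfolding C_def by simp
  have c0: "c > 0" unfolding c_def using cIS_pos[OF \<gamma>pos] by simp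
  have main: "well_posed_with \<Omega> U Q \<mu> lam \<kappa> \<xi> C c"
    if csv: "closed_subspace_v \<Omega> (H1_D \<Omega> \<Gamma>Du) U"
      and css: "closed_subspace_s \<Omega> (H1_P \<Omega> \<Gamma>Nv) Q"
      and ker: "\<forall>p\<in>kerI \<Omega> U Q. L2norm \<Omega> p = 0"
      and IS: "\<forall>p\<in>kerI_perp \<Omega> U Q. L2norm \<Omega> p > 0 \<longrightarrow>
          (\<forall>t < \<gamma> * L2norm \<Omega> p. \<exists>u\<in>U. H1vnorm \<Omega> u > 0 \<and> bI \<Omega> u p > t * H1vnorm \<Omega> u)"
      and pos: "\<mu> > 0" "lam > 0" "\<kappa> > 0" "\<xi> > 0"
    for U Q \<mu> lam \<kappa> \<xi>
  proof -
    have HU: "H1v \<Omega> u" if "u \<in> U" for u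
    proof -
      have "u \<in> H1_D \<Omega> \<Gamma>Du" using csv that unfolding closed_subspace_v_def by blast
      then show ?thesis unfolding H1_D_def H1v_def H1_zero_on_def by blast
    qed
    have HQ: "H1 \<Omega> p" if "p \<in> Q" for p
    proof -
      have "p \<in> H1_P \<Omega> \<Gamma>Nv" using css that unfolding closed_subspace_s_def by blast
      then show ?thesis unfolding H1_P_def H1_zero_on_def by blast
    qed
    have Qneg: "(\<lambda>x. -1 * p x) \<in> Q" if "p \<in> Q" for p
      using css that unfolding closed_subspace_s_def by blast
    have Q0: "(\<lambda>x. 0) \<in> Q" using css unfolding closed_subspace_s_def by blast
    show ?thesis
      unfolding well_posed_with_def
    proof (intro conjI ballI impI allI)
      fix up \<phi>q assume up: "up \<in> U \<times> Q" and \<phi>q: "\<phi>q \<in> U \<times> Q"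
      obtain u p where upe: "up = (u, p)" by (cases up)
      obtain \<phi> q where \<phi>qe: "\<phi>q = (\<phi>, q)" by (cases \<phi>q)
      show "\<bar>LI \<Omega> \<mu> lam \<kappa> \<xi> up \<phi>q\<bar> \<le> C * prod_normI \<Omega> \<mu> lam \<kappa> \<xi> up * prod_normI \<Omega> \<mu> lam \<kappa> \<xi> \<phi>q"
        unfolding upe \<phi>qe C_def
        by (rule bounded_LI) (use up \<phi>q upe \<phi>qe HU HQ pos in auto)
    next
      fix up t assume up: "up \<in> U \<times> Q" and N: "0 < prod_normI \<Omega> \<mu> lam \<kappa> \<xi> up"
        and t: "t < c * prod_normI \<Omega> \<mu> lam \<kappa> \<xi> up"
      obtain u p where upe: "up = (u, p)" by (cases up)
      show "\<exists>\<phi>q\<in>U \<times> Q. 0 < prod_normI \<Omega> \<mu> lam \<kappa> \<xi> \<phi>q \<and>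
              t * prod_normI \<Omega> \<mu> lam \<kappa> \<xi> \<phi>q < LI \<Omega> \<mu> lam \<kappa> \<xi> up \<phi>q"
        unfolding upe
        by (rule infsup_LI[OF \<Omega> \<gamma>pos HU HQ Qneg Q0 ker IS pos])
           (use up upe N t c_def in auto)
    qed
  qed
  show ?thesis
    by (intro exI[of _ C] exI[of _ c] conjI C0 c0 allI impI main) auto
qed


end
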